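(* Let $\Gamma$ be a Dynkin diagram of finite type, $\mathfrak{g}_\Gamma$ the corresponding finite-dimensional semisimple Lie algebra, and $S\subsetneq\Gamma$ a proper subdiagram. Let $\mathfrak{g}_S$ be the subalgebra generated by $\{e_\alpha,f_\alpha:\alpha\in S\}$ and $\mathfrak{p}_S$ the subalgebra generated by $\{e_\alpha:\alpha\in\Gamma\}\cup\{f_\alpha:\alpha\in S\}$. Then the relative Lie algebra cohomology $H^{>0}(\mathfrak{p}_S,\mathfrak{g}_S;\mathbb{C})$ with trivial coefficients is nonzero.
   Context: Vertices of $\Gamma$ index the simple roots $\alpha$ of $\mathfrak{g}_\Gamma$, and $\{e_\alpha,h_\alpha,f_\alpha\}$ is the $\mathfrak{sl}_2$-triple of the simple root $\alpha$. $H^{>0}$ denotes the direct sum of the cohomology groups in positive degrees. *)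

theory Defs
  imports Complex_Main
begin

text \<open>A Dynkin diagram with vertex set the finite type 'i is encoded by its Cartan matrix
  A i j = alpha_j(h_i).\<close>

definition finite_type_cartan :: "('i::finite \<Rightarrow> 'i \<Rightarrow> int) \<Rightarrow> bool" where
  "finite_type_cartan A \<longleftrightarrow>
     (\<forall>i. A i i = 2) \<and>
     (\<forall>i j. i \<noteq> j \<longrightarrow> A i j \<le> 0) \<and>
     (\<forall>i j. A i j = 0 \<longleftrightarrow> A j i = 0) \<and>
     (\<exists>d :: 'i \<Rightarrow> real. (\<forall>i. d i > 0) \<and>
        (\<forall>i j. d i * of_int (A i j) = d j * of_int (A j i)) \<and>
        (\<forall>x :: 'i \<Rightarrow> real. x \<noteq> (\<lambda>_. 0) \<longrightarrow>
            (\<Sum>i\<in>UNIV. \<Sum>j\<in>UNIV. x i * d i * of_int (A i j) * x j) > 0))"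

definition lie_algebra :: "(complex \<Rightarrow> 'a::ab_group_add \<Rightarrow> 'a) \<Rightarrow> ('a \<Rightarrow> 'a \<Rightarrow> 'a) \<Rightarrow> bool" where
  "lie_algebra sc br \<longleftrightarrow>
     vector_space sc \<and>
     (\<forall>x y z. br (x + y) z = br x z + br y z \<and> br x (y + z) = br x y + br x z) \<and>
     (\<forall>a x y. br (sc a x) y = sc a (br x y) \<and> br x (sc a y) = sc a (br x y)) \<and>
     (\<forall>x. br x x = 0) \<and>
     (\<forall>x y z. br x (br y z) + br y (br z x) + br z (br x y) = 0)"

inductive_set lie_gen :: "(complex \<Rightarrow> 'a::ab_group_add \<Rightarrow> 'a) \<Rightarrow> ('a \<Rightarrow> 'a \<Rightarrow> 'a) \<Rightarrow> 'a set \<Rightarrow> 'a set"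
  for sc br X where
  gen: "x \<in> X \<Longrightarrow> x \<in> lie_gen sc br X"
| zero: "0 \<in> lie_gen sc br X"
| add: "x \<in> lie_gen sc br X \<Longrightarrow> y \<in> lie_gen sc br X \<Longrightarrow> x + y \<in> lie_gen sc br X"
| smult: "x \<in> lie_gen sc br X \<Longrightarrow> sc a x \<in> lie_gen sc br X"
| bracket: "x \<in> lie_gen sc br X \<Longrightarrow> y \<in> lie_gen sc br X \<Longrightarrow> br x y \<in> lie_gen sc br X"

text \<open>(L, sc, br) is the semisimple Lie algebra g_A with Chevalley generators e, f, h:
  Serre presentation, generated by the generators, h linearly independent (this rules out
  proper quotients of g_A, so by Serre's theorem L is isomorphic to g_A), finite-dimensional.\<close>
definition chevalley_realization ::
  "('i::finite \<Rightarrow> 'i \<Rightarrow> int) \<Rightarrow> (complex \<Rightarrow> 'a::ab_group_add \<Rightarrow> 'a) \<Rightarrow> ('a \<Rightarrow> 'a \<Rightarrow> 'a)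
    \<Rightarrow> ('i \<Rightarrow> 'a) \<Rightarrow> ('i \<Rightarrow> 'a) \<Rightarrow> ('i \<Rightarrow> 'a) \<Rightarrow> bool" where
  "chevalley_realization A sc br e f h \<longleftrightarrow>
     lie_algebra sc br \<and>
     (\<exists>B. finite B \<and> module.span sc B = UNIV) \<and>
     inj h \<and> \<not> module.dependent sc (range h) \<and>
     (\<forall>i j. br (h i) (h j) = 0) \<and>
     (\<forall>i j. br (h i) (e j) = sc (of_int (A i j)) (e j)) \<and>
     (\<forall>i j. br (h i) (f j) = sc (of_int (- A i j)) (f j)) \<and>
     (\<forall>i. br (e i) (f i) = h i) \<and>
     (\<forall>i j. i \<noteq> j \<longrightarrow> br (e i) (f j) = 0) \<and>
     (\<forall>i j. i \<noteq> j \<longrightarrow> (br (e i) ^^ nat (1 - A i j)) (e j) = 0) \<and>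
     (\<forall>i j. i \<noteq> j \<longrightarrow> (br (f i) ^^ nat (1 - A i j)) (f j) = 0) \<and>
     lie_gen sc br (range e \<union> range f \<union> range h) = UNIV"

text \<open>n-cochains are functions on lists; only their values on lists of length n with
  entries in P matter.\<close>

definition plists :: "'a set \<Rightarrow> nat \<Rightarrow> 'a list set" where
  "plists P n = {xs. length xs = n \<and> set xs \<subseteq> P}"

definition rel_cochain ::
  "(complex \<Rightarrow> 'a::ab_group_add \<Rightarrow> 'a) \<Rightarrow> ('a \<Rightarrow> 'a \<Rightarrow> 'a) \<Rightarrow> 'a set \<Rightarrow> 'a set \<Rightarrow> nat
     \<Rightarrow> ('a list \<Rightarrow> complex) \<Rightarrow> bool" where
  "rel_cochain sc br P K n c \<longleftrightarrow>
     \<comment> \<open>multilinear\<close>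
     (\<forall>xs\<in>plists P n. \<forall>i<n. \<forall>u\<in>P. \<forall>v\<in>P. \<forall>a.
        c (xs[i := sc a u + v]) = a * c (xs[i := u]) + c (xs[i := v])) \<and>
     \<comment> \<open>alternating\<close>
     (\<forall>xs\<in>plists P n. \<forall>i j. i < j \<and> j < n \<and> xs ! i = xs ! j \<longrightarrow> c xs = 0) \<and>
     \<comment> \<open>vanishes on K (descends to P/K)\<close>
     (\<forall>xs\<in>plists P n. (\<exists>i<n. xs ! i \<in> K) \<longrightarrow> c xs = 0) \<and>
     \<comment> \<open>K-invariant\<close>
     (\<forall>xs\<in>plists P n. \<forall>y\<in>K. (\<Sum>i<n. c (xs[i := br y (xs ! i)])) = 0)"

definition del2 :: "nat \<Rightarrow> nat \<Rightarrow> 'a list \<Rightarrow> 'a list" where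
  "del2 i j xs = map (\<lambda>k. xs ! k) (filter (\<lambda>k. k \<noteq> i \<and> k \<noteq> j) [0..<length xs])"

definition ce_diff :: "('a \<Rightarrow> 'a \<Rightarrow> 'a) \<Rightarrow> nat \<Rightarrow> ('a list \<Rightarrow> complex) \<Rightarrow> 'a list \<Rightarrow> complex" where
  "ce_diff br n c xs =
     (\<Sum>i<Suc n. \<Sum>j\<in>{i<..<Suc n}.
        (-1) ^ (i + j) * c (br (xs ! i) (xs ! j) # del2 i j xs))"

definition rel_cohom_nonzero ::
  "(complex \<Rightarrow> 'a::ab_group_add \<Rightarrow> 'a) \<Rightarrow> ('a \<Rightarrow> 'a \<Rightarrow> 'a) \<Rightarrow> 'a set \<Rightarrow> 'a set \<Rightarrow> nat \<Rightarrow> bool" where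
  "rel_cohom_nonzero sc br P K n \<longleftrightarrow>
     (\<exists>c. rel_cochain sc br P K n c \<and>
          (\<forall>xs\<in>plists P (Suc n). ce_diff br n c xs = 0) \<and>
          \<not> (\<exists>b m. n = Suc m \<and> rel_cochain sc br P K m b \<and>
                 (\<forall>xs\<in>plists P n. ce_diff br m b xs = c xs)))"

end

theory Submission
  imports Defs "Jordan_Normal_Form.Determinant"
begin

definition del1 :: "nat \<Rightarrow> 'a list \<Rightarrow> 'a list" where
  "del1 k xs = take k xs @ drop (Suc k) xs"

lemma length_del1[simp]: "k < length xs \<Longrightarrow> length (del1 k xs) = length xs - 1"
  unfolding del1_def by auto

lemma set_del1: "set (del1 k xs) \<subseteq> set xs"
  unfolding del1_def by (auto dest: in_set_takeD in_set_dropD)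

lemma del1_map: "del1 k (map g xs) = map g (del1 k xs)"
  unfolding del1_def by (simp add: drop_map take_map)

lemma del1_update_same[simp]: "del1 k (xs[k:=w]) = del1 k xs"
  unfolding del1_def by simp

lemma nth_del1: "k < length xs \<Longrightarrow> i < length xs - 1 \<Longrightarrow>
   del1 k xs ! i = xs ! (if i < k then i else Suc i)"
  unfolding del1_def by (auto simp: nth_append min_def)

lemma plists_iff: "xs \<in> plists Q n \<longleftrightarrow> length xs = n \<and> (\<forall>i<n. xs ! i \<in> Q)"
  unfolding plists_def by (auto simp: set_conv_nth)

lemma plists_update: "xs \<in> plists Q n \<Longrightarrow> w \<in> Q \<Longrightarrow> xs[k:=w] \<in> plists Q n"
  unfolding plists_def by (auto dest: set_update_subset_insert[THEN subsetD])

lemma plists_nth: "xs \<in> plists Q n \<Longrightarrow> i < n \<Longrightarrow> xs ! i \<in> Q"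
  unfolding plists_iff by auto

lemma plists_del1: "xs \<in> plists Q (Suc n) \<Longrightarrow> k < Suc n \<Longrightarrow> del1 k xs \<in> plists Q n"
  unfolding plists_def using set_del1 by fastforce

lemma plists_Cons: "w # xs \<in> plists Q (Suc n) \<longleftrightarrow> w \<in> Q \<and> xs \<in> plists Q n"
  unfolding plists_def by auto

lemma del1_Suc_swap:
  assumes "Suc k < length xs"
  shows "del1 k (xs[Suc k := xs ! k]) = del1 (Suc k) xs"
proof -
  have "drop (Suc k) (xs[Suc k := xs ! k]) = xs ! k # drop (Suc (Suc k)) xs"
    using assms by (metis Cons_nth_drop_Suc drop_update_cancel length_list_update lessI nth_list_update_eq)
  moreover have "take (Suc k) xs = take k xs @ [xs ! k]"
    using assms by (simp add: take_Suc_conv_app_nth)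
  ultimately show ?thesis unfolding del1_def by simp
qed


locale vsl = fixes sc :: "complex \<Rightarrow> 'a::ab_group_add \<Rightarrow> 'a" assumes vs: "vector_space sc"
begin

sublocale vector_space sc by (rule vs)

definition lin_at :: "'a set \<Rightarrow> nat \<Rightarrow> ('a list \<Rightarrow> complex) \<Rightarrow> nat \<Rightarrow> bool" where
  "lin_at Q n f k \<longleftrightarrow> (\<forall>xs\<in>plists Q n. \<forall>u\<in>Q. \<forall>v\<in>Q. \<forall>a.
      f (xs[k := sc a u + v]) = a * f (xs[k:=u]) + f (xs[k:=v]))"

definition alt :: "'a set \<Rightarrow> nat \<Rightarrow> ('a list \<Rightarrow> complex) \<Rightarrow> bool" where
  "alt Q n f \<longleftrightarrow> (\<forall>xs\<in>plists Q n. \<forall>i j. i<j \<and> j<n \<and> xs!i = xs!j \<longrightarrow> f xs = 0)"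

lemma lin_atD: "lin_at Q n f k \<Longrightarrow> xs\<in>plists Q n \<Longrightarrow> u\<in>Q \<Longrightarrow> v\<in>Q \<Longrightarrow>
      f (xs[k := sc a u + v]) = a * f (xs[k:=u]) + f (xs[k:=v])"
  unfolding lin_at_def by blast

lemma altD: "alt Q n f \<Longrightarrow> xs\<in>plists Q n \<Longrightarrow> i < j \<Longrightarrow> j < n \<Longrightarrow> xs!i = xs!j \<Longrightarrow> f xs = 0"
  unfolding alt_def by blast

lemma altD': "alt Q n f \<Longrightarrow> xs\<in>plists Q n \<Longrightarrow> i \<noteq> j \<Longrightarrow> i < n \<Longrightarrow> j < n \<Longrightarrow> xs!i = xs!j \<Longrightarrow> f xs = 0"
  unfolding alt_def by (metis linorder_neqE_nat)

lemma lin_at_zero: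
  assumes "subspace Q" "lin_at Q n f k" "xs\<in>plists Q n"
  shows "f (xs[k := 0]) = 0"
proof -
  have z: "0 \<in> Q" using assms(1) subspace_0 by blast
  have "f (xs[k := sc 1 0 + 0]) = 1 * f (xs[k:=0]) + f (xs[k:=0])"
    by (rule lin_atD[OF assms(2,3) z z])
  then show ?thesis by simp
qed

lemma lin_at_add:
  assumes "subspace Q" "lin_at Q n f k" "xs\<in>plists Q n" "u \<in> Q" "v \<in> Q"
  shows "f (xs[k := u + v]) = f (xs[k:=u]) + f (xs[k:=v])"
  using lin_atD[OF assms(2,3,4,5), of 1] by simp

lemma lin_at_scale:
  assumes "subspace Q" "lin_at Q n f k" "xs\<in>plists Q n" "u \<in> Q"
  shows "f (xs[k := sc a u]) = a * f (xs[k:=u])"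
  using lin_atD[OF assms(2,3,4), of 0 a] lin_at_zero[OF assms(1,2,3)] assms(1) subspace_0 by simp

lemma lin_at_sum:
  assumes "subspace Q" "lin_at Q n f k" "xs\<in>plists Q n" "finite T" "\<forall>t\<in>T. g t \<in> Q"
  shows "f (xs[k := (\<Sum>t\<in>T. sc (a t) (g t))]) = (\<Sum>t\<in>T. a t * f (xs[k := g t]))"
  using assms(4,5)
proof (induction T rule: finite_induct)
  case empty
  then show ?case using lin_at_zero[OF assms(1,2,3)] by simp
next
  case (insert t T)
  have s: "(\<Sum>t\<in>T. sc (a t) (g t)) \<in> Q"
    using insert assms(1) by (auto intro!: subspace_sum subspace_scale)
  have "f (xs[k := (\<Sum>t\<in>insert t T. sc (a t) (g t))]) =
        f (xs[k := sc (a t) (g t) + (\<Sum>t\<in>T. sc (a t) (g t))])"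
    using insert by simp
  also have "\<dots> = a t * f (xs[k := g t]) + f (xs[k := (\<Sum>t\<in>T. sc (a t) (g t))])"
    by (rule lin_atD[OF assms(2,3)]) (use insert s in auto)
  finally show ?case using insert by simp
qed

lemma alt_swap:
  assumes Q: "subspace Q" and li: "lin_at Q n f i" and lj: "lin_at Q n f j" and al: "alt Q n f"
    and ij: "i < j" "j < n" and xs: "xs \<in> plists Q n"
  shows "f (xs[i := xs!j, j := xs!i]) = - f xs"
proof -
  define a where "a = xs!i"
  define b where "b = xs!j"
  have aQ: "a \<in> Q" "b \<in> Q" using xs ij unfolding a_def b_def by (auto intro: plists_nth)
  have abQ: "a + b \<in> Q" using aQ Q by (simp add: subspace_add)
  define Z where "Z u v = f (xs[i:=u, j:=v])" for u v
  have Zi: "Z (u + u') v = Z u v + Z u' v" if "u \<in> Q" "u' \<in> Q" "v \<in> Q" for u u' v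
  proof -
    have "xs[j:=v] \<in> plists Q n" using xs that by (simp add: plists_update)
    from lin_at_add[OF Q li this that(1,2)] show ?thesis
      unfolding Z_def using ij by (simp add: list_update_swap)
  qed
  have Zj: "Z u (v + v') = Z u v + Z u v'" if "u \<in> Q" "v \<in> Q" "v' \<in> Q" for u v v'
  proof -
    have "xs[i:=u] \<in> plists Q n" using xs that by (simp add: plists_update)
    from lin_at_add[OF Q lj this that(2,3)] show ?thesis
      unfolding Z_def by simp
  qed
  have Zd: "Z u u = 0" if "u \<in> Q" for u
    unfolding Z_def
    by (rule altD[OF al _ ij(1,2)]) (use xs that ij in \<open>auto simp: plists_update plists_iff nth_list_update\<close>)
  have "0 = Z (a+b) (a+b)" using Zd abQ by simp
  also have "\<dots> = Z a a + Z a b + (Z b a + Z b b)" using Zi Zj aQ abQ by simp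
  also have "\<dots> = Z a b + Z b a" using Zd aQ by simp
  finally have "Z b a = - Z a b" by (simp add: eq_neg_iff_add_eq_0 add.commute)
  moreover have "Z a b = f xs" unfolding Z_def a_def b_def by simp
  ultimately show ?thesis unfolding Z_def a_def b_def by simp
qed

definition multilin :: "'a set \<Rightarrow> nat \<Rightarrow> ('a list \<Rightarrow> complex) \<Rightarrow> bool" where
  "multilin Q n f \<longleftrightarrow> (\<forall>k<n. lin_at Q n f k)"

lemma move:
  assumes Q: "subspace Q" and ml: "multilin Q n f" and al: "alt Q n f"
  shows "xs \<in> plists Q n \<Longrightarrow> k < n \<Longrightarrow> w \<in> Q \<Longrightarrow> f (xs[k := w]) = (-1)^k * f (w # del1 k xs)"
proof (induction k arbitrary: xs)
  case 0
  then obtain y ys where "xs = y # ys" by (cases xs) (auto simp: plists_def)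
  then show ?case by (simp add: del1_def)
next
  case (Suc k)
  have len: "length xs = n" using Suc.prems plists_def by auto
  define xs' where "xs' = xs[Suc k := xs ! k]"
  have xs': "xs' \<in> plists Q n" using Suc.prems unfolding xs'_def
    by (simp add: plists_update plists_nth)
  let ?ys = "xs[Suc k := w]"
  have ys: "?ys \<in> plists Q n" using Suc.prems by (simp add: plists_update)
  have "f (?ys[k := ?ys ! Suc k, Suc k := ?ys ! k]) = - f ?ys"
    by (rule alt_swap[OF Q _ _ al _ _ ys]) (use ml Suc.prems multilin_def in auto)
  moreover have "?ys[k := ?ys ! Suc k, Suc k := ?ys ! k] = xs'[k := w]"
    unfolding xs'_def using Suc.prems len by (simp add: list_update_swap)
  moreover have "f (xs'[k := w]) = (-1)^k * f (w # del1 k xs')"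
    using Suc.IH[OF xs'] Suc.prems by simp
  moreover have "del1 k xs' = del1 (Suc k) xs" unfolding xs'_def
    by (rule del1_Suc_swap) (use Suc.prems len in auto)
  ultimately show ?case by simp
qed

lemma move_nth:
  assumes Q: "subspace Q" and ml: "multilin Q n f" and al: "alt Q n f"
    and xs: "xs \<in> plists Q n" and k: "k < n"
  shows "f xs = (-1)^k * f (xs ! k # del1 k xs)"
  using move[OF Q ml al xs k plists_nth[OF xs k]] by simp

end

context vsl begin

lemma top_vanish:
  assumes Q: "subspace Q" and KQ: "K \<subseteq> Q" and BKK: "span BK \<subseteq> K"
    and indBK: "independent BK" and fin: "finite BK" "finite B"
    and Qsp: "Q \<subseteq> span (BK \<union> B)" and card: "card B < m"
    and ml: "multilin Q m f" and al: "alt Q m f"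
    and kv: "\<forall>xs\<in>plists Q m. \<forall>p<m. xs!p \<in> K \<longrightarrow> f xs = 0"
    and xs: "xs \<in> plists Q m"
  shows "f xs = 0"
proof (rule ccontr)
  assume nz: "f xs \<noteq> 0"
  have len: "length xs = m" using xs plists_def by auto
  have dist: "distinct xs"
  proof (rule ccontr)
    assume "\<not> distinct xs"
    then obtain i j where "i < m" "j < m" "i \<noteq> j" "xs!i = xs!j"
      using len by (auto simp: distinct_conv_nth)
    then have "f xs = 0" using altD'[OF al xs] by blast
    with nz show False by simp
  qed
  have disjK: "set xs \<inter> K = {}"
  proof (rule ccontr)
    assume "set xs \<inter> K \<noteq> {}"
    then obtain p where "p < m" "xs!p \<in> K" using len by (auto simp: in_set_conv_nth)
    then show False using kv xs nz by blast
  qed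
  have BKK': "BK \<subseteq> K" using BKK span_superset by blast
  have disj: "BK \<inter> set xs = {}" using disjK BKK' by blast
  let ?X = "BK \<union> set xs"
  have indX: "independent ?X"
  proof
    assume "dependent ?X"
    then obtain t u where t: "finite t" "t \<subseteq> ?X" and sum0: "(\<Sum>v\<in>t. sc (u v) v) = 0"
      and ex: "\<exists>v\<in>t. u v \<noteq> 0"
      unfolding dependent_explicit by blast
    show False
    proof (cases "\<exists>v\<in>t \<inter> set xs. u v \<noteq> 0")
      case False
      have "(\<Sum>v\<in>t. sc (u v) v) = (\<Sum>v\<in>t \<inter> BK. sc (u v) v)"
        by (rule sum.mono_neutral_right) (use t False in auto)
      then have "(\<Sum>v\<in>t \<inter> BK. sc (u v) v) = 0" using sum0 by simp
      moreover have "\<exists>v\<in>t \<inter> BK. u v \<noteq> 0" using ex False t by blast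
      ultimately have "dependent BK"
        unfolding dependent_explicit by (intro exI[of _ "t \<inter> BK"] exI[of _ u]) (use t in auto)
      then show False using indBK by simp
    next
      case True
      then obtain x where x: "x \<in> t" "x \<in> set xs" "u x \<noteq> 0" by blast
      then obtain p where p: "p < m" "xs ! p = x" using len by (auto simp: in_set_conv_nth)
      define T1 where "T1 = t \<inter> BK"
      define T2 where "T2 = t \<inter> set xs - {x}"
      have tsplit: "t = insert x (T1 \<union> T2)" "x \<notin> T1 \<union> T2" "T1 \<inter> T2 = {}"
        using t x disj unfolding T1_def T2_def by auto
      have finT: "finite T1" "finite T2" using t unfolding T1_def T2_def by auto
      have "0 = sc (u x) x + ((\<Sum>v\<in>T1. sc (u v) v) + (\<Sum>v\<in>T2. sc (u v) v))"
        using sum0 tsplit finT by (simp add: sum.union_disjoint)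
      define A where "A = (\<Sum>v\<in>T1. sc (u v) v)"
      define Bs where "Bs = (\<Sum>v\<in>T2. sc (u v) v)"
      define c0 where "c0 = - inverse (u x)"
      have ux: "sc (u x) x = - (A + Bs)" unfolding A_def Bs_def
        using \<open>0 = _\<close> eq_neg_iff_add_eq_0 by metis
      have "sc c0 (A + Bs) = sc c0 (- (sc (u x) x))" using ux by simp
      also have "\<dots> = x" using x(3) by (simp add: c0_def scale_scale)
      finally have "x = sc c0 A + sc c0 Bs" by (simp add: scale_right_distrib)
      then have xeq: "x = (\<Sum>v\<in>T1. sc (c0 * u v) v) + (\<Sum>v\<in>T2. sc (c0 * u v) v)"
        unfolding A_def Bs_def by (simp add: scale_sum_right)
      define kap where "kap = (\<Sum>v\<in>T1. sc (c0 * u v) v)"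
      have "kap \<in> span BK" unfolding kap_def T1_def
        by (intro span_sum span_scale span_base) auto
      then have kapK: "kap \<in> K" using BKK by blast
      have T2Q: "\<forall>v\<in>T2. v \<in> Q" using xs unfolding T2_def plists_def by auto
      have sQ: "(\<Sum>v\<in>T2. sc (c0 * u v) v) \<in> Q"
        using T2Q Q by (auto intro!: subspace_sum subspace_scale)
      have lp: "lin_at Q m f p" using ml p multilin_def by auto
      have "f xs = f (xs[p := x])" using p len by (metis list_update_id)
      also have "\<dots> = f (xs[p := kap + (\<Sum>v\<in>T2. sc (c0 * u v) v)])"
        using xeq unfolding kap_def by simp
      also have "\<dots> = f (xs[p := kap]) + f (xs[p := (\<Sum>v\<in>T2. sc (c0 * u v) v)])"
        by (rule lin_at_add[OF Q lp xs]) (use kapK KQ sQ in auto)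
      also have "f (xs[p := kap]) = 0"
        using kv plists_update[OF xs, of kap p] kapK KQ p len by auto
      also have "f (xs[p := (\<Sum>v\<in>T2. sc (c0 * u v) v)]) =
          (\<Sum>v\<in>T2. (c0 * u v) * f (xs[p := v]))"
        by (rule lin_at_sum[OF Q lp xs finT(2) T2Q])
      also have "\<dots> = 0"
      proof (rule sum.neutral, rule ballI)
        fix v assume v: "v \<in> T2"
        then obtain q where q: "q < m" "xs ! q = v" using len unfolding T2_def by (auto simp: in_set_conv_nth)
        have "q \<noteq> p" using v q p unfolding T2_def by auto
        have "f (xs[p := v]) = 0"
          by (rule altD'[OF al plists_update[OF xs] \<open>q \<noteq> p\<close> q(1) p(1)])
             (use v T2Q q p len \<open>q \<noteq> p\<close> in auto)
        then show "(c0 * u v) * f (xs[p := v]) = 0" by simp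
      qed
      finally show False using nz by simp
    qed
  qed
  have XQ: "?X \<subseteq> span (BK \<union> B)"
    using Qsp xs BKK' KQ unfolding plists_def by (auto intro: span_base)
  have "card ?X \<le> card (BK \<union> B)"
    using independent_span_bound[OF _ indX XQ] fin by auto
  also have "\<dots> \<le> card BK + card B" by (rule card_Un_le)
  finally have "card BK + card (set xs) \<le> card BK + card B"
    using card_Un_disjoint[OF fin(1) _ disj] by simp
  then have "m \<le> card B" using dist len distinct_card by fastforce
  then show False using card by simp
qed

end

lemma filter_upt_split:
  assumes "P q" "q < n"
  shows "filter P [0..<n] = filter P [0..<q] @ q # filter P [Suc q..<n]"
proof -
  have "[0..<n] = [0..<q] @ q # [Suc q..<n]"
    using assms(2) by (metis upt_add_eq_append upt_conv_Cons zero_le le_add_diff_inverse less_imp_le_nat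
       add_0 le0 nat_le_linear)
  then show ?thesis using assms(1) by simp
qed

lemma filter_upt_del1:
  assumes "P q" "q < n"
  shows "del1 (length (filter P [0..<q])) (filter P [0..<n]) = filter (\<lambda>k. P k \<and> k \<noteq> q) [0..<n]"
    and "filter P [0..<n] ! length (filter P [0..<q]) = q"
proof -
  have s: "filter P [0..<n] = filter P [0..<q] @ q # filter P [Suc q..<n]"
    by (rule filter_upt_split[of P q n, OF assms])
  have "[0..<n] = [0..<q] @ q # [Suc q..<n]"
    using assms(2) by (metis upt_add_eq_append upt_conv_Cons zero_le le_add_diff_inverse less_imp_le_nat
       add_0 le0 nat_le_linear)
  then have "filter (\<lambda>k. P k \<and> k \<noteq> q) [0..<n] =
     filter (\<lambda>k. P k \<and> k \<noteq> q) [0..<q] @ filter (\<lambda>k. P k \<and> k \<noteq> q) [Suc q..<n]" by simp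
  also have "filter (\<lambda>k. P k \<and> k \<noteq> q) [0..<q] = filter P [0..<q]"
    by (rule filter_cong) auto
  also have "filter (\<lambda>k. P k \<and> k \<noteq> q) [Suc q..<n] = filter P [Suc q..<n]"
    by (rule filter_cong) auto
  finally show "del1 (length (filter P [0..<q])) (filter P [0..<n]) = filter (\<lambda>k. P k \<and> k \<noteq> q) [0..<n]"
    unfolding s del1_def by simp
  show "filter P [0..<n] ! length (filter P [0..<q]) = q" unfolding s by simp
qed

lemma length_filter_ne2:
  assumes "i \<noteq> j"
  shows "length (filter (\<lambda>k. k \<noteq> i \<and> k \<noteq> j) [0..<q]) + (if i < q then 1 else 0) + (if j < q then 1 else 0) = q"
  using assms by (induction q) auto

lemma length_filter_ne1:
  shows "length (filter (\<lambda>k. k \<noteq> i) [0..<q]) + (if i < q then 1 else 0) = q"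
  by (induction q) auto

lemma del2_sym: "del2 i j xs = del2 j i xs"
  unfolding del2_def by (metis (no_types, lifting) filter_cong)

lemma length_del2: "i < length xs \<Longrightarrow> j < length xs \<Longrightarrow> i \<noteq> j \<Longrightarrow> length (del2 i j xs) = length xs - 2"
proof -
  assume a: "i < length xs" "j < length xs" "i \<noteq> j"
  have "length (filter (\<lambda>k. k \<noteq> i \<and> k \<noteq> j) [0..<length xs]) + 1 + 1 = length xs"
    using length_filter_ne2[OF a(3), of "length xs"] a by simp
  then show ?thesis unfolding del2_def by simp
qed

lemma set_del2: "set (del2 i j xs) \<subseteq> set xs"
  unfolding del2_def by auto

lemma del2_update_in: "p = i \<or> p = j \<Longrightarrow> del2 i j (xs[p:=w]) = del2 i j xs"
  unfolding del2_def by (auto intro!: map_cong)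

lemma del2_split:
  assumes "q \<noteq> i" "q \<noteq> j" "q < length xs"
  shows "del2 i j xs = map (nth xs) (filter (\<lambda>k. k \<noteq> i \<and> k \<noteq> j) [0..<q]) @ xs ! q #
     map (nth xs) (filter (\<lambda>k. k \<noteq> i \<and> k \<noteq> j) [Suc q..<length xs])"
  unfolding del2_def using filter_upt_split[of "\<lambda>k. k \<noteq> i \<and> k \<noteq> j" q "length xs"] assms by simp

lemma del2_nth_pos:
  assumes "q \<noteq> i" "q \<noteq> j" "q < length xs"
  shows "del2 i j xs ! length (filter (\<lambda>k. k \<noteq> i \<and> k \<noteq> j) [0..<q]) = xs ! q"
  using del2_split[OF assms] by (simp add: nth_append)

lemma del2_update_out:
  assumes "p \<noteq> i" "p \<noteq> j" "p < length xs"
  shows "del2 i j (xs[p:=w]) = (del2 i j xs)[length (filter (\<lambda>k. k \<noteq> i \<and> k \<noteq> j) [0..<p]) := w]"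
proof -
  have a: "p < length (xs[p:=w])" using assms by simp
  have "del2 i j (xs[p:=w]) = map (nth (xs[p:=w])) (filter (\<lambda>k. k \<noteq> i \<and> k \<noteq> j) [0..<p]) @ w #
     map (nth (xs[p:=w])) (filter (\<lambda>k. k \<noteq> i \<and> k \<noteq> j) [Suc p..<length xs])"
    using del2_split[OF assms(1,2) a] assms by simp
  also have "map (nth (xs[p:=w])) (filter (\<lambda>k. k \<noteq> i \<and> k \<noteq> j) [0..<p]) =
             map (nth xs) (filter (\<lambda>k. k \<noteq> i \<and> k \<noteq> j) [0..<p])"
    by (rule map_cong) auto
  also have "map (nth (xs[p:=w])) (filter (\<lambda>k. k \<noteq> i \<and> k \<noteq> j) [Suc p..<length xs]) =
             map (nth xs) (filter (\<lambda>k. k \<noteq> i \<and> k \<noteq> j) [Suc p..<length xs])"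
    by (rule map_cong) auto
  finally show ?thesis
    using del2_split[OF assms] by (simp add: list_update_append)
qed

lemma del1_del2:
  assumes "w0 \<noteq> r" "w0 \<noteq> m" "w0 < length xs"
  shows "del1 (length (filter (\<lambda>k. k \<noteq> r \<and> k \<noteq> m) [0..<w0])) (del2 r m xs) =
         map (nth xs) (filter (\<lambda>k. k \<noteq> r \<and> k \<noteq> m \<and> k \<noteq> w0) [0..<length xs])"
  using filter_upt_del1(1)[of "\<lambda>k. k \<noteq> r \<and> k \<noteq> m" w0 "length xs"] assms
  unfolding del2_def del1_map by (simp add: conj_assoc)

lemma del1_as_map:
  assumes "p < length xs"
  shows "del1 p xs = map (nth xs) (filter (\<lambda>k. k \<noteq> p) [0..<length xs])"
proof -
  have "del1 (length (filter (\<lambda>k. True) [0..<p])) (filter (\<lambda>k. True) [0..<length xs]) =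
      filter (\<lambda>k. True \<and> k \<noteq> p) [0..<length xs]"
    by (rule filter_upt_del1(1)) (use assms in auto)
  then have "del1 p [0..<length xs] = filter (\<lambda>k. k \<noteq> p) [0..<length xs]" by simp
  then have "map (nth xs) (del1 p [0..<length xs]) = map (nth xs) (filter (\<lambda>k. k \<noteq> p) [0..<length xs])"
    by simp
  then show ?thesis by (simp add: del1_map[symmetric] map_nth)
qed

lemma del2_as_del1:
  assumes "p \<noteq> m" "p < length xs" "m < length xs"
  shows "del2 p m xs = del1 (length (filter (\<lambda>k. k \<noteq> p) [0..<m])) (del1 p xs)"
    and "del1 p xs ! length (filter (\<lambda>k. k \<noteq> p) [0..<m]) = xs ! m"
proof -
  have e: "del1 (length (filter (\<lambda>k. k \<noteq> p) [0..<m])) (filter (\<lambda>k. k \<noteq> p) [0..<length xs]) =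
        filter (\<lambda>k. k \<noteq> p \<and> k \<noteq> m) [0..<length xs]"
    by (rule filter_upt_del1(1)) (use assms in auto)
  show "del2 p m xs = del1 (length (filter (\<lambda>k. k \<noteq> p) [0..<m])) (del1 p xs)"
    unfolding del1_as_map[OF assms(2)] del1_map e del2_def ..
  have "filter (\<lambda>k. k \<noteq> p) [0..<length xs] ! length (filter (\<lambda>k. k \<noteq> p) [0..<m]) = m"
    by (rule filter_upt_del1(2)) (use assms in auto)
  moreover have "length (filter (\<lambda>k. k \<noteq> p) [0..<m]) < length (filter (\<lambda>k. k \<noteq> p) [0..<length xs])"
    using filter_upt_split[of "\<lambda>k. k \<noteq> p" m "length xs"] assms by simp
  ultimately show "del1 p xs ! length (filter (\<lambda>k. k \<noteq> p) [0..<m]) = xs ! m"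
    unfolding del1_as_map[OF assms(2)] by simp
qed


locale lie = vsl sc for sc :: "complex \<Rightarrow> 'a::ab_group_add \<Rightarrow> 'a" +
  fixes br :: "'a \<Rightarrow> 'a \<Rightarrow> 'a"
  assumes la: "lie_algebra sc br"
begin

lemma br_add_left: "br (x + y) z = br x z + br y z"
  and br_add_right: "br x (y + z) = br x y + br x z"
  and br_scale_left: "br (sc a x) y = sc a (br x y)"
  and br_scale_right: "br x (sc a y) = sc a (br x y)"
  and br_self: "br x x = 0"
  and jacobi: "br x (br y z) + br y (br z x) + br z (br x y) = 0"
  using la unfolding lie_algebra_def by blast+

lemma br_zero_left[simp]: "br 0 y = 0"
  using br_add_left[of 0 0 y] by simp

lemma br_zero_right[simp]: "br x 0 = 0"
  using br_add_right[of x 0 0] by simp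

lemma br_antisym: "br y x = - br x y"
proof -
  have e: "br (x+y) (x+y) = (br x x + br y x) + (br x y + br y y)"
    by (simp only: br_add_left br_add_right)
  then have "0 = br x y + br y x" by (simp add: br_self add.commute)
  then show ?thesis by (metis add.commute eq_neg_iff_add_eq_0)
qed

lemma br_neg_left: "br (- x) y = - br x y"
  using br_add_left[of x "-x" y] by (simp add: eq_neg_iff_add_eq_0 add.commute)

lemma br_neg_right: "br x (- y) = - br x y"
  using br_add_right[of x y "-y"] by (simp add: eq_neg_iff_add_eq_0 add.commute)

lemma br_diff_left: "br (x - y) z = br x z - br y z"
  using br_add_left[of x "-y" z] by (simp add: br_neg_left)

lemma br_diff_right: "br z (x - y) = br z x - br z y"
  using br_add_right[of z x "-y"] by (simp add: br_neg_right)

lemma br_sum_left: "br (\<Sum>t\<in>T. g t) y = (\<Sum>t\<in>T. br (g t) y)"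
  by (induction T rule: infinite_finite_induct) (auto simp: br_add_left)

lemma br_sum_right: "br y (\<Sum>t\<in>T. g t) = (\<Sum>t\<in>T. br y (g t))"
  by (induction T rule: infinite_finite_induct) (auto simp: br_add_right)

lemma jacobi': "br (br x y) z = br x (br y z) - br y (br x z)"
proof -
  have "br x (br y z) + br y (br z x) + br z (br x y) = 0" by (rule jacobi)
  moreover have "br z x = - br x z" by (rule br_antisym)
  moreover have "br z (br x y) = - br (br x y) z" by (rule br_antisym)
  ultimately show ?thesis by (simp add: br_neg_right algebra_simps)
qed

definition cterm :: "('a list \<Rightarrow> complex) \<Rightarrow> 'a list \<Rightarrow> nat \<Rightarrow> nat \<Rightarrow> complex" where
  "cterm c xs i j = (-1)^(i+j) * c (br (xs!i) (xs!j) # del2 i j xs)"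

definition Pr :: "nat \<Rightarrow> (nat \<times> nat) set" where
  "Pr N = {(i,j). i < j \<and> j < N}"

lemma finite_Pr: "finite (Pr N)"
  unfolding Pr_def by (rule finite_subset[of _ "{..<N} \<times> {..<N}"]) auto

lemma ce_diff_Pr: "ce_diff br n c xs = (\<Sum>x\<in>Pr (Suc n). cterm c xs (fst x) (snd x))"
proof -
  have "ce_diff br n c xs = (\<Sum>i<Suc n. \<Sum>j\<in>{i<..<Suc n}. cterm c xs i j)"
    unfolding ce_diff_def cterm_def ..
  also have "\<dots> = (\<Sum>x\<in>Sigma {..<Suc n} (\<lambda>i. {i<..<Suc n}). cterm c xs (fst x) (snd x))"
    by (subst sum.Sigma) (auto simp: split_def)
  also have "Sigma {..<Suc n} (\<lambda>i. {i<..<Suc n}) = Pr (Suc n)"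
    unfolding Pr_def by auto
  finally show ?thesis .
qed

end

locale lie_pk = lie sc br for sc :: "complex \<Rightarrow> 'a::ab_group_add \<Rightarrow> 'a" and br +
  fixes P K :: "'a set"
  assumes Psub: "subspace P" and Pbr: "\<And>x y. x \<in> P \<Longrightarrow> y \<in> P \<Longrightarrow> br x y \<in> P"
    and KP: "K \<subseteq> P"
begin

lemma rc_multilin: "rel_cochain sc br P K n c \<Longrightarrow> multilin P n c"
  unfolding rel_cochain_def multilin_def lin_at_def by blast

lemma rc_alt: "rel_cochain sc br P K n c \<Longrightarrow> alt P n c"
  unfolding rel_cochain_def alt_def by blast

lemma rc_kv: "rel_cochain sc br P K n c \<Longrightarrow> xs \<in> plists P n \<Longrightarrow> p < n \<Longrightarrow> xs!p \<in> K \<Longrightarrow> c xs = 0"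
  unfolding rel_cochain_def by blast

lemma rc_inv: "rel_cochain sc br P K n c \<Longrightarrow> xs \<in> plists P n \<Longrightarrow> y \<in> K \<Longrightarrow>
   (\<Sum>i<n. c (xs[i := br y (xs ! i)])) = 0"
  unfolding rel_cochain_def by blast

lemma P0: "0 \<in> P" using Psub subspace_0 by blast
lemma Padd: "x \<in> P \<Longrightarrow> y \<in> P \<Longrightarrow> x + y \<in> P" using Psub subspace_add by blast
lemma Pscale: "x \<in> P \<Longrightarrow> sc a x \<in> P" using Psub subspace_scale by blast
lemma Pneg: "x \<in> P \<Longrightarrow> - x \<in> P" using Psub subspace_neg by blast

lemma plists_del2: "xs \<in> plists P (Suc (Suc m)) \<Longrightarrow> i < Suc (Suc m) \<Longrightarrow> j < Suc (Suc m) \<Longrightarrow> i \<noteq> j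
   \<Longrightarrow> del2 i j xs \<in> plists P m"
  using length_del2[of i xs j] set_del2[of i j xs] unfolding plists_def by auto

context
  fixes n c assumes rc: "rel_cochain sc br P K (Suc n) c"
begin

lemma c_lin0: "rest \<in> plists P n \<Longrightarrow> u \<in> P \<Longrightarrow> v \<in> P \<Longrightarrow>
    c ((sc a u + v) # rest) = a * c (u # rest) + c (v # rest)"
  using lin_atD[of P "Suc n" c 0 "u # rest" u v a] rc_multilin[OF rc]
  by (simp add: multilin_def plists_Cons)

lemma c_lin_pos: "rest \<in> plists P n \<Longrightarrow> b \<in> P \<Longrightarrow> u \<in> P \<Longrightarrow> v \<in> P \<Longrightarrow> k < n \<Longrightarrow>
    c (b # rest[k := sc a u + v]) = a * c (b # rest[k:=u]) + c (b # rest[k:=v])"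
  using lin_atD[of P "Suc n" c "Suc k" "b # rest" u v a] rc_multilin[OF rc]
  by (simp add: multilin_def plists_Cons)

lemma c_zero0: "rest \<in> plists P n \<Longrightarrow> c (0 # rest) = 0"
  using c_lin0[of rest 0 0 1] P0 by simp

lemma c_neg0: "rest \<in> plists P n \<Longrightarrow> u \<in> P \<Longrightarrow> c ((- u) # rest) = - c (u # rest)"
  using c_lin0[of rest u 0 "-1"] P0 c_zero0 by (simp add: scale_minus_left)

end

end

context lie_pk begin

lemma pos_lt_del2:
  assumes "q \<noteq> i" "q \<noteq> j" "q < length xs"
  shows "length (filter (\<lambda>k. k \<noteq> i \<and> k \<noteq> j) [0..<q]) < length (del2 i j xs)"
  using del2_split[OF assms] by simp

context
  fixes n c assumes rc: "rel_cochain sc br P K (Suc n) c"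
begin

lemma cterm_lin:
  assumes xs: "xs \<in> plists P (Suc (Suc n))" and ij: "i < j" "j < Suc (Suc n)" and p: "p < Suc (Suc n)"
    and u: "u \<in> P" and v: "v \<in> P"
  shows "cterm c (xs[p := sc a u + v]) i j = a * cterm c (xs[p:=u]) i j + cterm c (xs[p:=v]) i j"
proof -
  have len: "length xs = Suc (Suc n)" using xs plists_def by auto
  define rest where "rest = del2 i j xs"
  have rest: "rest \<in> plists P n" unfolding rest_def using plists_del2[OF xs] ij by auto
  have xi: "xs!i \<in> P" "xs!j \<in> P" using plists_nth[OF xs, of i] plists_nth[OF xs, of j] ij by auto
  consider "p = i" | "p = j" | "p \<noteq> i" "p \<noteq> j" by blast
  then show ?thesis
  proof cases
    case 1
    have d: "del2 i j (xs[p:=w]) = rest" for w unfolding rest_def using 1 by (simp add: del2_update_in)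
    have e: "(xs[p:=w]) ! i = w" "(xs[p:=w]) ! j = xs ! j" for w using 1 ij len by auto
    have "c (br (sc a u + v) (xs!j) # rest) = a * c (br u (xs!j) # rest) + c (br v (xs!j) # rest)"
      unfolding br_add_left br_scale_left by (rule c_lin0[OF rc rest]) (use u v xi Pbr in auto)
    then show ?thesis unfolding cterm_def d e by (simp add: algebra_simps)
  next
    case 2
    have d: "del2 i j (xs[p:=w]) = rest" for w unfolding rest_def using 2 by (simp add: del2_update_in)
    have e: "(xs[p:=w]) ! j = w" "(xs[p:=w]) ! i = xs ! i" for w using 2 ij len by auto
    have "c (br (xs!i) (sc a u + v) # rest) = a * c (br (xs!i) u # rest) + c (br (xs!i) v # rest)"
      unfolding br_add_right br_scale_right by (rule c_lin0[OF rc rest]) (use u v xi Pbr in auto)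
    then show ?thesis unfolding cterm_def d e by (simp add: algebra_simps)
  next
    case 3
    define pos where "pos = length (filter (\<lambda>k. k \<noteq> i \<and> k \<noteq> j) [0..<p])"
    have d: "del2 i j (xs[p:=w]) = rest[pos := w]" for w
      unfolding rest_def pos_def by (rule del2_update_out) (use 3 p len in auto)
    have e: "(xs[p:=w]) ! i = xs ! i" "(xs[p:=w]) ! j = xs ! j" for w using 3 by auto
    have pl: "pos < n" using pos_lt_del2[of p i j xs] 3 p len rest unfolding pos_def rest_def plists_def by auto
    have "c (br (xs!i) (xs!j) # rest[pos := sc a u + v]) =
        a * c (br (xs!i) (xs!j) # rest[pos := u]) + c (br (xs!i) (xs!j) # rest[pos := v])"
      by (rule c_lin_pos[OF rc rest _ u v pl]) (use xi Pbr in auto)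
    then show ?thesis unfolding cterm_def d e by (simp add: algebra_simps)
  qed
qed

lemma dc_multilin: "multilin P (Suc (Suc n)) (ce_diff br (Suc n) c)"
  unfolding multilin_def lin_at_def
proof (intro allI impI ballI)
  fix p xs u v a assume p: "p < Suc (Suc n)" and xs: "xs \<in> plists P (Suc (Suc n))" and u: "u \<in> P" and v: "v \<in> P"
  have "ce_diff br (Suc n) c (xs[p := sc a u + v]) =
     (\<Sum>x\<in>Pr (Suc (Suc n)). a * cterm c (xs[p:=u]) (fst x) (snd x) + cterm c (xs[p:=v]) (fst x) (snd x))"
    unfolding ce_diff_Pr
    by (rule sum.cong[OF refl], rule cterm_lin[OF xs _ _ p u v]) (auto simp: Pr_def)
  then show "ce_diff br (Suc n) c (xs[p := sc a u + v]) =
        a * ce_diff br (Suc n) c (xs[p := u]) + ce_diff br (Suc n) c (xs[p := v])"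
    unfolding ce_diff_Pr by (simp add: sum.distrib sum_distrib_left)
qed

end
end

lemma neg1_pow_parity: "odd (e1 + e2) \<Longrightarrow> (-1::complex)^e2 = - ((-1)^e1)"
proof -
  assume "odd (e1 + e2)"
  then have "even e1 \<longleftrightarrow> odd e2" by auto
  then show ?thesis by (cases "even e1") (auto simp: neg_one_even_power neg_one_odd_power)
qed

lemma sum_invol_zero:
  fixes g :: "'b \<Rightarrow> complex"
  assumes fin: "finite A" and m: "\<And>x. x \<in> A \<Longrightarrow> phi x \<in> A" and inv: "\<And>x. x \<in> A \<Longrightarrow> phi (phi x) = x"
    and neg: "\<And>x. x \<in> A \<Longrightarrow> g (phi x) = - g x"
  shows "(\<Sum>x\<in>A. g x) = 0"
proof -
  have "(\<Sum>x\<in>A. g (phi x)) = (\<Sum>x\<in>A. g x)"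
    by (rule sum.reindex_bij_witness[of _ phi phi]) (use m inv in auto)
  then have "(\<Sum>x\<in>A. - g x) = (\<Sum>x\<in>A. g x)" using neg by (metis (no_types, lifting) sum.cong)
  then have "- (\<Sum>x\<in>A. g x) = (\<Sum>x\<in>A. g x)" by (simp add: sum_negf)
  then show ?thesis by simp
qed

lemma length_filter_mono:
  assumes "p < q" "P p"
  shows "length (filter P [0..<p]) < length (filter P [0..<q])"
proof -
  have "[0..<q] = [0..<p] @ [p..<q]" using upt_add_eq_append[of 0 p "q - p"] assms by simp
  moreover have "[p..<q] = p # [Suc p..<q]" using assms upt_conv_Cons by auto
  ultimately show ?thesis using assms by simp
qed

lemma del1_Cons_Suc: "del1 (Suc k) (w # zs) = w # del1 k zs"
  unfolding del1_def by simp

context lie_pk begin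

context
  fixes n c assumes rc: "rel_cochain sc br P K (Suc n) c"
begin

lemma cterm_minmax:
  assumes xs: "xs \<in> plists P (Suc (Suc n))" and rm: "r \<noteq> m" "r < Suc (Suc n)" "m < Suc (Suc n)"
  shows "cterm c xs (min r m) (max r m) =
     (-1)^(r+m) * (if r < m then 1 else -1) * c (br (xs!r) (xs!m) # del2 r m xs)"
proof -
  have rest: "del2 r m xs \<in> plists P n" using plists_del2[OF xs] rm by auto
  have xi: "xs!r \<in> P" "xs!m \<in> P" using plists_nth[OF xs, of r] plists_nth[OF xs, of m] rm by auto
  show ?thesis
  proof (cases "r < m")
    case True then show ?thesis unfolding cterm_def by (simp add: min_def max_def)
  next
    case False
    then have mr: "m < r" using rm by simp
    have b: "br (xs!r) (xs!m) \<in> P" using xi Pbr by auto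
    have e: "br (xs!m) (xs!r) = - br (xs!r) (xs!m)" by (rule br_antisym)
    have "c (br (xs!m) (xs!r) # del2 r m xs) = - c (br (xs!r) (xs!m) # del2 r m xs)"
      unfolding e by (rule c_neg0[OF rc rest b])
    then show ?thesis unfolding cterm_def using mr by (simp add: min_def max_def del2_sym add.commute)
  qed
qed

lemma cterm_move:
  assumes xs: "xs \<in> plists P (Suc (Suc n))" and d: "r \<noteq> m" "w0 \<noteq> r" "w0 \<noteq> m"
    and l: "r < Suc (Suc n)" "m < Suc (Suc n)" "w0 < Suc (Suc n)"
  shows "cterm c xs (min r m) (max r m) =
     (-1)^(r+m) * (if r < m then 1 else -1) * (-1)^(length (filter (\<lambda>k. k \<noteq> r \<and> k \<noteq> m) [0..<w0])) *
     c (br (xs!r) (xs!m) # xs!w0 # map (nth xs) (filter (\<lambda>k. k \<noteq> r \<and> k \<noteq> m \<and> k \<noteq> w0) [0..<Suc (Suc n)]))"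
proof -
  have len: "length xs = Suc (Suc n)" using xs plists_def by auto
  define pos where "pos = length (filter (\<lambda>k. k \<noteq> r \<and> k \<noteq> m) [0..<w0])"
  define zs where "zs = del2 r m xs"
  define W where "W = br (xs!r) (xs!m)"
  have zs: "zs \<in> plists P n" unfolding zs_def using plists_del2[OF xs] d l by auto
  have xi: "xs!r \<in> P" "xs!m \<in> P" "xs!w0 \<in> P" using plists_nth[OF xs] l by auto
  have W: "W \<in> P" unfolding W_def using xi Pbr by auto
  have pl: "pos < n" using pos_lt_del2[of w0 r m xs] d l len zs unfolding pos_def zs_def plists_def by auto
  have zpos: "zs ! pos = xs ! w0" unfolding zs_def pos_def by (rule del2_nth_pos) (use d l len in auto)
  have D: "del1 pos zs = map (nth xs) (filter (\<lambda>k. k \<noteq> r \<and> k \<noteq> m \<and> k \<noteq> w0) [0..<Suc (Suc n)])"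
    unfolding zs_def pos_def using del1_del2[of w0 r m xs] d l len by simp
  have Wz: "W # zs \<in> plists P (Suc n)" using zs W by (simp add: plists_Cons)
  have "c (W # zs) = (-1)^(Suc pos) * c ((W # zs) ! Suc pos # del1 (Suc pos) (W # zs))"
    by (rule move_nth[OF Psub rc_multilin[OF rc] rc_alt[OF rc] Wz]) (use pl in simp)
  also have "(W # zs) ! Suc pos # del1 (Suc pos) (W # zs) = xs!w0 # W # del1 pos zs"
    using zpos by (simp add: del1_Cons_Suc)
  also have "c (xs!w0 # W # del1 pos zs) = - c (W # xs!w0 # del1 pos zs)"
  proof -
    have L: "xs!w0 # W # del1 pos zs \<in> plists P (Suc n)"
      using plists_del1[of zs P "n - 1" pos] zs pl W xi by (cases n) (auto simp: plists_Cons)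
    have "c ((xs!w0 # W # del1 pos zs)[0 := (xs!w0 # W # del1 pos zs)!1, 1 := (xs!w0 # W # del1 pos zs)!0])
        = - c (xs!w0 # W # del1 pos zs)"
      by (rule alt_swap[OF Psub _ _ rc_alt[OF rc] _ _ L]) (use rc_multilin[OF rc] pl in \<open>auto simp: multilin_def\<close>)
    then show ?thesis by simp
  qed
  finally have "c (W # zs) = (-1)^pos * c (W # xs!w0 # del1 pos zs)" by simp
  then show ?thesis unfolding cterm_minmax[OF xs d(1) l(1,2)] D
    by (simp add: W_def zs_def pos_def)
qed

end
end

lemma sigma_pow: "(if r < (m::nat) then 1 else -1::complex) = (-1)^(if r < m then 0 else 1)"
  by simp

lemma parity_flip:
  assumes "r \<noteq> m" "w0 \<noteq> r" "w0 \<noteq> m"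
    and "a + (if r < w0 then 1 else 0) + (if m < w0 then 1 else 0) = (w0::nat)"
    and "b + (if w0 < r then 1 else 0) + (if m < r then 1 else 0) = r"
  shows "odd ((r+m+(if r < m then 0 else 1)+a) + (w0+m+(if w0 < m then 0 else 1)+b))"
  using assms by (auto split: if_splits)

context lie_pk begin

context
  fixes n c assumes rc: "rel_cochain sc br P K (Suc n) c"
begin

lemma pair_flip:
  assumes xs: "xs \<in> plists P (Suc (Suc n))" and d: "r \<noteq> m" "w0 \<noteq> r" "w0 \<noteq> m"
    and l: "r < Suc (Suc n)" "m < Suc (Suc n)" "w0 < Suc (Suc n)" and eq: "xs!r = xs!w0"
  shows "cterm c xs (min w0 m) (max w0 m) = - cterm c xs (min r m) (max r m)"
proof -
  define a where "a = length (filter (\<lambda>k. k \<noteq> r \<and> k \<noteq> m) [0..<w0])"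
  define b where "b = length (filter (\<lambda>k. k \<noteq> w0 \<and> k \<noteq> m) [0..<r])"
  have ha: "a + (if r < w0 then 1 else 0) + (if m < w0 then 1 else 0) = w0"
    unfolding a_def by (rule length_filter_ne2) (use d in auto)
  have hb: "b + (if w0 < r then 1 else 0) + (if m < r then 1 else 0) = r"
    unfolding b_def by (rule length_filter_ne2) (use d in auto)
  have fe: "filter (\<lambda>k. k \<noteq> w0 \<and> k \<noteq> m \<and> k \<noteq> r) [0..<Suc (Suc n)] =
            filter (\<lambda>k. k \<noteq> r \<and> k \<noteq> m \<and> k \<noteq> w0) [0..<Suc (Suc n)]"
    by (rule filter_cong) auto
  define R where "R = c (br (xs!r) (xs!m) # xs!w0 # map (nth xs) (filter (\<lambda>k. k \<noteq> r \<and> k \<noteq> m \<and> k \<noteq> w0) [0..<Suc (Suc n)]))"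
  have d2: "w0 \<noteq> m" "r \<noteq> w0" "r \<noteq> m" using d by auto
  have m1: "cterm c xs (min r m) (max r m) =
     (-1)^(r+m) * (if r < m then 1 else -1) * (-1)^a * R"
    unfolding R_def a_def by (rule cterm_move[OF rc xs d l])
  have m2: "cterm c xs (min w0 m) (max w0 m) =
     (-1)^(w0+m) * (if w0 < m then 1 else -1) * (-1)^b *
     c (br (xs!w0) (xs!m) # xs!r # map (nth xs) (filter (\<lambda>k. k \<noteq> w0 \<and> k \<noteq> m \<and> k \<noteq> r) [0..<Suc (Suc n)]))"
    unfolding b_def by (rule cterm_move[OF rc xs d2 l(3,2,1)])
  have c1: "cterm c xs (min r m) (max r m) = (-1)^(r+m+(if r < m then 0 else 1)+a) * R"
    unfolding m1 sigma_pow power_add by (simp only: mult.assoc)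
  have c2: "cterm c xs (min w0 m) (max w0 m) = (-1)^(w0+m+(if w0 < m then 0 else 1)+b) * R"
    unfolding m2 sigma_pow power_add fe R_def eq[symmetric] by (simp only: mult.assoc)
  have "(-1::complex)^(w0+m+(if w0 < m then 0 else 1)+b) = - ((-1)^(r+m+(if r < m then 0 else 1)+a))"
    by (rule neg1_pow_parity, rule parity_flip[OF d ha hb])
  then show ?thesis unfolding c1 c2 by simp
qed

lemma dc_alt: "alt P (Suc (Suc n)) (ce_diff br (Suc n) c)"
  unfolding alt_def
proof (intro ballI allI impI)
  fix xs p q assume xs: "xs \<in> plists P (Suc (Suc n))" and pq: "p < q \<and> q < Suc (Suc n) \<and> xs ! p = xs ! q"
  have len: "length xs = Suc (Suc n)" using xs plists_def by auto
  define sw where "sw k = (if k = p then q else if k = q then p else k)" for k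
  define phi where "phi x = (min (sw (fst x)) (sw (snd x)), max (sw (fst x)) (sw (snd x)))" for x
  define g where "g x = cterm c xs (fst x) (snd x)" for x
  have "(\<Sum>x\<in>Pr (Suc (Suc n)). g x) = 0"
  proof (rule sum_invol_zero[OF finite_Pr])
    fix x assume "x \<in> Pr (Suc (Suc n))"
    then obtain i j where x: "x = (i,j)" "i < j" "j < Suc (Suc n)" unfolding Pr_def by auto
    show "phi x \<in> Pr (Suc (Suc n))" using x pq unfolding phi_def sw_def Pr_def by (auto simp: min_def max_def)
    show "phi (phi x) = x" using x pq unfolding phi_def sw_def by (auto simp: min_def max_def)
    show "g (phi x) = - g x"
    proof (cases "i \<noteq> p \<and> i \<noteq> q \<and> j \<noteq> p \<and> j \<noteq> q")
      case True
      then have ph: "phi x = x" using x unfolding phi_def sw_def by auto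
      define zs where "zs = del2 i j xs"
      have zs: "zs \<in> plists P n" unfolding zs_def using plists_del2[OF xs] x by auto
      define a where "a = length (filter (\<lambda>k. k \<noteq> i \<and> k \<noteq> j) [0..<p])"
      define b where "b = length (filter (\<lambda>k. k \<noteq> i \<and> k \<noteq> j) [0..<q])"
      have ab: "a < b" unfolding a_def b_def by (rule length_filter_mono) (use pq True in auto)
      have bl: "b < n" using pos_lt_del2[of q i j xs] True pq len zs unfolding b_def zs_def plists_def by auto
      have za: "zs ! a = xs ! p" unfolding zs_def a_def by (rule del2_nth_pos) (use True pq len in auto)
      have zb: "zs ! b = xs ! q" unfolding zs_def b_def by (rule del2_nth_pos) (use True pq len in auto)
      have W: "br (xs!i) (xs!j) \<in> P" using Pbr plists_nth[OF xs] x by auto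
      have "c (br (xs!i) (xs!j) # zs) = 0"
        by (rule altD'[OF rc_alt[OF rc], of _ "Suc a" "Suc b"]) (use zs W ab bl za zb pq in \<open>auto simp: plists_Cons\<close>)
      then have "g x = 0" unfolding g_def cterm_def zs_def x by simp
      then show ?thesis using ph by simp
    next
      case False
      show ?thesis
      proof (cases "i = p \<and> j = q")
        case True
        then have ph: "phi x = x" using x pq unfolding phi_def sw_def by auto
        have zs: "del2 i j xs \<in> plists P n" using plists_del2[OF xs] x by auto
        have "g x = 0" unfolding g_def cterm_def x using True pq c_zero0[OF rc zs] by (simp add: br_self)
        then show ?thesis using ph by simp
      next
        case False2: False
        define r where "r = (if i = p \<or> i = q then i else j)"
        define m where "m = (if i = p \<or> i = q then j else i)"
        have rpq: "r = p \<or> r = q" and mpq: "m \<noteq> p" "m \<noteq> q"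
          using False False2 x pq unfolding r_def m_def by auto
        have rm: "r \<noteq> m" using x unfolding r_def m_def by auto
        have xeq: "x = (min r m, max r m)" using x unfolding r_def m_def by (auto simp: min_def max_def)
        have pheq: "phi x = (min (sw r) m, max (sw r) m)"
          unfolding xeq phi_def using mpq sw_def by (auto simp: min_def max_def)
        have l: "r < Suc (Suc n)" "m < Suc (Suc n)" "sw r < Suc (Suc n)"
          using x pq rpq unfolding r_def m_def sw_def by auto
        have "cterm c xs (min (sw r) m) (max (sw r) m) = - cterm c xs (min r m) (max r m)"
          by (rule pair_flip[OF xs rm _ _ l]) (use rpq mpq pq in \<open>auto simp: sw_def\<close>)
        moreover have "g (phi x) = cterm c xs (min (sw r) m) (max (sw r) m)" unfolding g_def pheq by simp
        moreover have "g x = cterm c xs (min r m) (max r m)" unfolding g_def using xeq by (metis fst_conv snd_conv)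
        ultimately show ?thesis by simp
      qed
    qed
  qed
  then show "ce_diff br (Suc n) c xs = 0" unfolding ce_diff_Pr g_def .
qed

end
end

lemma parity_kv:
  assumes "p \<noteq> (m::nat)" "k + (if p < m then 1 else 0) = m"
  shows "even ((p + m + (if p < m then 0 else 1) + k) + Suc p)"
  using assms by (auto split: if_splits)

lemma neg1_pow_even: "even (e1 + e2) \<Longrightarrow> (-1::complex)^e1 = (-1)^e2"
proof -
  assume "even (e1 + e2)"
  then have "even e1 \<longleftrightarrow> even e2" by auto
  then show ?thesis by (cases "even e1") (auto simp: neg_one_even_power neg_one_odd_power)
qed

context lie_pk begin

context
  fixes n c assumes rc: "rel_cochain sc br P K (Suc n) c"
begin

lemma dc_kv:
  assumes xs: "xs \<in> plists P (Suc (Suc n))" and p: "p < Suc (Suc n)" and yK: "xs!p \<in> K"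
  shows "ce_diff br (Suc n) c xs = 0"
proof -
  have len: "length xs = Suc (Suc n)" using xs plists_def by auto
  define y where "y = xs ! p"
  define g where "g x = cterm c xs (fst x) (snd x)" for x
  define A1 where "A1 = {x\<in>Pr (Suc (Suc n)). fst x = p \<or> snd x = p}"
  define A2 where "A2 = Pr (Suc (Suc n)) - A1"
  have split: "(\<Sum>x\<in>Pr (Suc (Suc n)). g x) = (\<Sum>x\<in>A1. g x) + (\<Sum>x\<in>A2. g x)"
  proof -
    have "A1 \<subseteq> Pr (Suc (Suc n))" unfolding A1_def by auto
    from sum.subset_diff[OF this finite_Pr, of g] show ?thesis unfolding A2_def by (simp add: add.commute)
  qed
  have s2: "(\<Sum>x\<in>A2. g x) = 0"
  proof (rule sum.neutral, rule ballI)
    fix x assume "x \<in> A2"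
    then obtain i j where x: "x = (i,j)" "i < j" "j < Suc (Suc n)" "i \<noteq> p" "j \<noteq> p"
      unfolding A2_def A1_def Pr_def by auto
    define zs where "zs = del2 i j xs"
    have zs: "zs \<in> plists P n" unfolding zs_def using plists_del2[OF xs] x by auto
    define a where "a = length (filter (\<lambda>k. k \<noteq> i \<and> k \<noteq> j) [0..<p])"
    have al: "a < n" using pos_lt_del2[of p i j xs] x p len zs unfolding a_def zs_def plists_def by auto
    have za: "zs ! a = xs ! p" unfolding zs_def a_def by (rule del2_nth_pos) (use x p len in auto)
    have W: "br (xs!i) (xs!j) \<in> P" using Pbr plists_nth[OF xs] x by auto
    have "c (br (xs!i) (xs!j) # zs) = 0"
      by (rule rc_kv[OF rc, of _ "Suc a"]) (use zs W al za yK in \<open>auto simp: plists_Cons\<close>)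
    then show "g x = 0" unfolding g_def cterm_def zs_def x by simp
  qed
  define zs where "zs = del1 p xs"
  have zs: "zs \<in> plists P (Suc n)" unfolding zs_def using plists_del1[OF xs p] .
  define kap where "kap m = length (filter (\<lambda>k. k \<noteq> p) [0..<m])" for m
  have kap: "kap m + (if p < m then 1 else 0) = m" for m unfolding kap_def by (rule length_filter_ne1)
  have yP: "y \<in> P" using yK KP y_def by auto
  have trm: "g (min p m, max p m) = (-1)^(Suc p) * c (zs[kap m := br y (zs ! kap m)])"
    if m: "m < Suc (Suc n)" "m \<noteq> p" for m
  proof -
    have d: "del2 p m xs = del1 (kap m) zs" "zs ! kap m = xs ! m"
      unfolding zs_def kap_def using del2_as_del1[of p m xs] m p len by auto
    have kl: "kap m < Suc n" using kap[of m] m p by (auto split: if_splits)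
    have w: "br y (zs ! kap m) \<in> P" using Pbr yP plists_nth[OF zs kl] by auto
    have mv: "c (zs[kap m := br y (zs ! kap m)]) = (-1)^(kap m) * c (br y (zs ! kap m) # del1 (kap m) zs)"
      by (rule move[OF Psub rc_multilin[OF rc] rc_alt[OF rc] zs kl w])
    have mv': "c (br y (zs ! kap m) # del1 (kap m) zs) = (-1)^(kap m) * c (zs[kap m := br y (zs ! kap m)])"
      unfolding mv by (simp add: power_add[symmetric] mult.assoc[symmetric])
    have "g (min p m, max p m) = (-1)^(p+m) * (if p < m then 1 else -1) * c (br (xs!p) (xs!m) # del2 p m xs)"
      unfolding g_def by (simp add: cterm_minmax[OF rc xs m(2)[symmetric] p m(1)])
    also have "\<dots> = (-1)^(p+m) * (-1)^(if p < m then 0 else 1) * (-1)^(kap m) * c (zs[kap m := br y (zs ! kap m)])"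
    proof -
      have e: "c (br (xs!p) (xs!m) # del2 p m xs) = (-1)^(kap m) * c (zs[kap m := br y (zs ! kap m)])"
        using mv' unfolding d y_def by simp
      show ?thesis unfolding e sigma_pow by (simp add: mult.assoc)
    qed
    also have "\<dots> = (-1)^(p + m + (if p < m then 0 else 1) + kap m) * c (zs[kap m := br y (zs ! kap m)])"
      by (simp add: power_add)
    also have "(-1::complex)^(p + m + (if p < m then 0 else 1) + kap m) = (-1)^(Suc p)"
      by (rule neg1_pow_even, rule parity_kv) (use m kap in auto)
    finally show ?thesis .
  qed
  have s1: "(\<Sum>x\<in>A1. g x) = (\<Sum>m\<in>{..<Suc (Suc n)} - {p}. g (min p m, max p m))"
    by (rule sum.reindex_bij_witness[of _ "\<lambda>m. (min p m, max p m)" "\<lambda>x. if fst x = p then snd x else fst x"])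
       (use p in \<open>auto simp: A1_def Pr_def min_def max_def\<close>)
  also have "\<dots> = (\<Sum>m\<in>{..<Suc (Suc n)} - {p}. (-1)^(Suc p) * c (zs[kap m := br y (zs ! kap m)]))"
    by (rule sum.cong) (auto simp: trm)
  also have "\<dots> = (\<Sum>k\<in>{..<Suc n}. (-1)^(Suc p) * c (zs[k := br y (zs ! k)]))"
  proof (rule sum.reindex_bij_witness[of _ "\<lambda>k. if k < p then k else Suc k" kap])
    fix m assume "m \<in> {..<Suc (Suc n)} - {p}"
    then show "(if kap m < p then kap m else Suc (kap m)) = m" "kap m \<in> {..<Suc n}"
      using kap[of m] p by (auto split: if_splits)
  next
    fix k assume "k \<in> {..<Suc n}"
    then show "kap (if k < p then k else Suc k) = k" "(if k < p then k else Suc k) \<in> {..<Suc (Suc n)} - {p}"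
      by (cases "k < p"; use kap[of k] kap[of "Suc k"] p in \<open>auto split: if_splits\<close>)+
  qed simp
  also have "\<dots> = (-1)^(Suc p) * (\<Sum>k<Suc n. c (zs[k := br y (zs ! k)]))"
    by (rule sum_distrib_left[symmetric])
  also have "(\<Sum>k<Suc n. c (zs[k := br y (zs ! k)])) = 0"
    by (rule rc_inv[OF rc zs]) (use yK y_def in simp)
  finally have "(\<Sum>x\<in>A1. g x) = 0" by simp
  then show ?thesis unfolding ce_diff_Pr g_def[symmetric] split s2 by simp
qed

end
end

lemma cartan_inj:
  fixes A :: "'i::finite \<Rightarrow> 'i \<Rightarrow> int" and c :: "'i \<Rightarrow> real"
  assumes ft: "finite_type_cartan A" and h: "\<forall>j. (\<Sum>i\<in>UNIV. c i * of_int (A i j)) = 0"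
  shows "c = (\<lambda>_. 0)"
proof -
  obtain d :: "'i \<Rightarrow> real" where dpos: "\<forall>i. d i > 0"
    and sym: "\<forall>i j. d i * of_int (A i j) = d j * of_int (A j i)"
    and pd: "\<forall>x :: 'i \<Rightarrow> real. x \<noteq> (\<lambda>_. 0) \<longrightarrow> (\<Sum>i\<in>UNIV. \<Sum>j\<in>UNIV. x i * d i * of_int (A i j) * x j) > 0"
    using ft unfolding finite_type_cartan_def by blast
  define y where "y i = c i / d i" for i
  have cy: "c i = d i * y i" for i using dpos unfolding y_def by (simp add: less_imp_neq[symmetric])
  have Ay: "(\<Sum>i\<in>UNIV. of_int (A j i) * y i) = 0" for j
  proof -
    have "0 = (\<Sum>i\<in>UNIV. c i * of_int (A i j))" using h by simp
    also have "\<dots> = (\<Sum>i\<in>UNIV. y i * (d i * of_int (A i j)))" unfolding cy by (simp add: ac_simps)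
    also have "\<dots> = (\<Sum>i\<in>UNIV. y i * (d j * of_int (A j i)))" using sym by simp
    also have "\<dots> = d j * (\<Sum>i\<in>UNIV. of_int (A j i) * y i)" by (simp add: sum_distrib_left ac_simps)
    finally show ?thesis using dpos by (metis mult_eq_0_iff less_irrefl)
  qed
  have "(\<Sum>i\<in>UNIV. \<Sum>j\<in>UNIV. y i * d i * of_int (A i j) * y j) = 0"
  proof -
    have "(\<Sum>i\<in>UNIV. \<Sum>j\<in>UNIV. y i * d i * of_int (A i j) * y j) =
          (\<Sum>i\<in>UNIV. y i * d i * (\<Sum>j\<in>UNIV. of_int (A i j) * y j))"
      by (simp add: sum_distrib_left ac_simps)
    also have "\<dots> = 0" using Ay by simp
    finally show ?thesis .
  qed
  then have "y = (\<lambda>_. 0)" using pd by fastforce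
  then show ?thesis using cy by (auto simp: fun_eq_iff)
qed

lemma cartan_surj:
  fixes A :: "'i::finite \<Rightarrow> 'i \<Rightarrow> int" and t :: "'i \<Rightarrow> real"
  assumes ft: "finite_type_cartan A"
  shows "\<exists>x::'i \<Rightarrow> real. \<forall>j. (\<Sum>i\<in>UNIV. x i * of_int (A i j)) = t j"
proof -
  obtain ls :: "'i list" where ls: "distinct ls" "set ls = UNIV"
    using finite_distinct_list[OF finite_UNIV] by blast
  define n where "n = length ls"
  have bij: "bij_betw ((!) ls) {..<n} UNIV" using bij_betw_nth[OF ls(1)] ls(2) n_def by auto
  have ex1: "\<exists>!k. k < n \<and> ls ! k = i0" for i0
  proof -
    have "i0 \<in> set ls" using ls(2) by simp
    then obtain k where "k < n" "ls ! k = i0" unfolding n_def by (auto simp: in_set_conv_nth)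
    moreover have "k' = k" if "k' < n" "ls ! k' = i0" for k'
      using that \<open>k < n\<close> \<open>ls ! k = i0\<close> ls(1) nth_eq_iff_index_eq unfolding n_def by metis
    ultimately show ?thesis by blast
  qed
  define ix where "ix i0 = (THE k. k < n \<and> ls ! k = i0)" for i0
  have inv1: "ix i0 < n" "ls ! (ix i0) = i0" for i0
    using theI'[OF ex1[of i0]] unfolding ix_def by auto
  have inv2: "ix (ls ! k) = k" if "k < n" for k
    unfolding ix_def by (rule the1_equality[OF ex1]) (use that in auto)
  have sumU: "(\<Sum>i\<in>UNIV. f i) = (\<Sum>k<n. f (ls ! k))" for f :: "'i \<Rightarrow> real"
    using sum.reindex_bij_betw[OF bij, of f] by simp
  define M :: "real mat" where "M = mat n n (\<lambda>(j,k). real_of_int (A (ls!k) (ls!j)))"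
  have M: "M \<in> carrier_mat n n" unfolding M_def by simp
  have Mv: "(M *\<^sub>v v) $ j = (\<Sum>k<n. v $ k * of_int (A (ls!k) (ls!j)))" if "j < n" "v \<in> carrier_vec n" for v j
    using that unfolding M_def by (auto simp: scalar_prod_def ac_simps lessThan_atLeast0 intro!: sum.cong)
  have "det M \<noteq> 0"
  proof
    assume "det M = 0"
    then obtain v where v: "v \<in> carrier_vec n" "v \<noteq> 0\<^sub>v n" "M *\<^sub>v v = 0\<^sub>v n"
      using det_0_iff_vec_prod_zero_field[OF M] by blast
    define c where "c i0 = v $ (ix i0)" for i0
    have "\<forall>j. (\<Sum>i\<in>UNIV. c i * of_int (A i j)) = 0"
    proof
      fix j
      have "(\<Sum>i\<in>UNIV. c i * of_int (A i j)) = (\<Sum>k<n. v $ k * of_int (A (ls!k) (ls!(ix j))))"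
        unfolding sumU c_def using inv1 inv2 by simp
      also have "\<dots> = (M *\<^sub>v v) $ (ix j)" using Mv[OF inv1(1) v(1)] by simp
      also have "\<dots> = 0" using v(3) inv1 by simp
      finally show "(\<Sum>i\<in>UNIV. c i * of_int (A i j)) = 0" .
    qed
    then have "c = (\<lambda>_. 0)" by (rule cartan_inj[OF ft])
    then have "v = 0\<^sub>v n" using v(1) inv2 unfolding c_def
      by (intro eq_vecI) (auto simp: fun_eq_iff, metis)
    with v(2) show False by simp
  qed
  define tv where "tv = vec n (\<lambda>j. t (ls!j))"
  define w where "w = adj_mat M *\<^sub>v tv"
  have w: "w \<in> carrier_vec n" unfolding w_def using adj_mat(1)[OF M] by (simp add: tv_def)
  have Mw: "M *\<^sub>v w = (M * adj_mat M) *\<^sub>v tv"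
    unfolding w_def using adj_mat(1)[OF M] M by (simp add: tv_def)
  have Mwj: "(M *\<^sub>v w) $ j = det M * t (ls ! j)" if "j < n" for j
  proof -
    have "(\<Sum>i = 0..<n. det M * (if i = j then 1 else 0) * t (ls ! i)) =
          (\<Sum>i = 0..<n. if i = j then det M * t (ls ! i) else 0)"
      by (rule sum.cong) auto
    also have "\<dots> = det M * t (ls ! j)" using that by simp
    finally show ?thesis
      unfolding Mw adj_mat(2)[OF M] using that by (simp add: tv_def scalar_prod_def)
  qed
  define x where "x i0 = w $ (ix i0) / det M" for i0
  have "\<forall>j. (\<Sum>i\<in>UNIV. x i * of_int (A i j)) = t j"
  proof
    fix j
    have "(\<Sum>i\<in>UNIV. x i * of_int (A i j)) = (\<Sum>k<n. w $ k * of_int (A (ls!k) (ls!(ix j)))) / det M"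
      unfolding sumU x_def using inv1 inv2 by (simp add: sum_divide_distrib)
    also have "\<dots> = (M *\<^sub>v w) $ (ix j) / det M" using Mv[OF inv1(1) w] by simp
    also have "\<dots> = t j" using Mwj[OF inv1(1)] inv1 \<open>det M \<noteq> 0\<close> by simp
    finally show "(\<Sum>i\<in>UNIV. x i * of_int (A i j)) = t j" .
  qed
  then show ?thesis by blast
qed


context lie begin

lemma lie_gen_subspace: "subspace (lie_gen sc br X)"
  unfolding subspace_def by (auto intro: lie_gen.intros)

lemma lie_gen_br: "x \<in> lie_gen sc br X \<Longrightarrow> y \<in> lie_gen sc br X \<Longrightarrow> br x y \<in> lie_gen sc br X"
  by (rule lie_gen.bracket)

lemma lie_gen_mono: assumes "X \<subseteq> Y" shows "lie_gen sc br X \<subseteq> lie_gen sc br Y"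
proof
  fix x assume "x \<in> lie_gen sc br X"
  then show "x \<in> lie_gen sc br Y"
    by (induction rule: lie_gen.induct) (use assms in \<open>auto intro: lie_gen.intros\<close>)
qed

end

locale setting = lie sc br for sc :: "complex \<Rightarrow> 'a::ab_group_add \<Rightarrow> 'a" and br +
  fixes A :: "'i::finite \<Rightarrow> 'i \<Rightarrow> int" and e f h :: "'i \<Rightarrow> 'a" and S :: "'i set"
  assumes ft: "finite_type_cartan A" and cr: "chevalley_realization A sc br e f h" and SU: "S \<noteq> UNIV"
begin

definition "PP = lie_gen sc br (range e \<union> f ` S)"
definition "KK = lie_gen sc br (e ` S \<union> f ` S)"

lemma he: "br (h i) (e j) = sc (of_int (A i j)) (e j)"
  and hf: "br (h i) (f j) = sc (of_int (- A i j)) (f j)"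
  and ef: "br (e i) (f i) = h i"
  and hind: "independent (range h)"
  and fin: "\<exists>B. finite B \<and> span B = UNIV"
  using cr unfolding chevalley_realization_def by blast+

lemma Aii: "A i i = 2" using ft unfolding finite_type_cartan_def by blast

lemma PP_sub: "subspace PP" unfolding PP_def by (rule lie_gen_subspace)
lemma KK_sub: "subspace KK" unfolding KK_def by (rule lie_gen_subspace)
lemma KK_PP: "KK \<subseteq> PP" unfolding KK_def PP_def by (rule lie_gen_mono) auto
lemma PP_br: "x \<in> PP \<Longrightarrow> y \<in> PP \<Longrightarrow> br x y \<in> PP" unfolding PP_def by (rule lie_gen_br)
lemma KK_br: "x \<in> KK \<Longrightarrow> y \<in> KK \<Longrightarrow> br x y \<in> KK" unfolding KK_def by (rule lie_gen_br)

sublocale lpk: lie_pk sc br PP KK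
  by unfold_locales (use PP_sub PP_br KK_PP in auto)

definition tS :: "'i \<Rightarrow> real" where "tS j = (if j \<in> S then 0 else 1)"

definition xH :: "'i \<Rightarrow> real" where
  "xH = (SOME x. \<forall>j. (\<Sum>i\<in>UNIV. x i * of_int (A i j)) = tS j)"

lemma xH: "(\<Sum>i\<in>UNIV. xH i * of_int (A i j)) = tS j"
  using someI_ex[OF cartan_surj[OF ft, of tS]] unfolding xH_def by blast

definition "HH = (\<Sum>i\<in>UNIV. sc (complex_of_real (xH i)) (h i))"

definition "D x = br HH x"

lemma D_e: "D (e j) = sc (of_real (tS j)) (e j)"
proof -
  have "D (e j) = (\<Sum>i\<in>UNIV. sc (complex_of_real (xH i) * of_int (A i j)) (e j))"
    unfolding D_def HH_def br_sum_left by (simp add: br_scale_left he scale_scale)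
  also have "\<dots> = sc (\<Sum>i\<in>UNIV. complex_of_real (xH i) * of_int (A i j)) (e j)"
    by (simp add: scale_sum_left)
  also have "(\<Sum>i\<in>UNIV. complex_of_real (xH i) * of_int (A i j)) = of_real (tS j)"
    unfolding xH[of j, symmetric] of_real_sum of_real_mult of_real_of_int_eq ..
  finally show ?thesis .
qed

lemma D_f: "D (f j) = sc (- of_real (tS j)) (f j)"
proof -
  have "D (f j) = (\<Sum>i\<in>UNIV. sc (complex_of_real (xH i) * of_int (- A i j)) (f j))"
    unfolding D_def HH_def br_sum_left by (simp add: br_scale_left hf scale_scale)
  also have "\<dots> = sc (\<Sum>i\<in>UNIV. complex_of_real (xH i) * of_int (- A i j)) (f j)"
    by (simp add: scale_sum_left)
  also have "(\<Sum>i\<in>UNIV. complex_of_real (xH i) * of_int (- A i j)) = - of_real (tS j)"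
  proof -
    have "(\<Sum>i\<in>UNIV. complex_of_real (xH i) * of_int (- A i j)) = - (\<Sum>i\<in>UNIV. complex_of_real (xH i) * of_int (A i j))"
      by (simp add: sum_negf[symmetric])
    also have "(\<Sum>i\<in>UNIV. complex_of_real (xH i) * of_int (A i j)) = of_real (tS j)"
      unfolding xH[of j, symmetric] of_real_sum of_real_mult of_real_of_int_eq ..
    finally show ?thesis .
  qed
  finally show ?thesis .
qed

lemma D_add: "D (x + y) = D x + D y" unfolding D_def by (rule br_add_right)
lemma D_scale: "D (sc a x) = sc a (D x)" unfolding D_def by (rule br_scale_right)
lemma D_zero: "D 0 = 0" unfolding D_def by simp
lemma D_sum: "D (\<Sum>t\<in>T. g t) = (\<Sum>t\<in>T. D (g t))" unfolding D_def by (rule br_sum_right)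

lemma D_br: "D (br x y) = br (D x) y + br x (D y)"
proof -
  have j: "br HH (br x y) + br x (br y HH) + br y (br HH x) = 0" by (rule jacobi)
  have "br y HH = - br HH y" by (rule br_antisym)
  moreover have "br y (br HH x) = - br (br HH x) y" by (rule br_antisym)
  ultimately have "br HH (br x y) - br x (br HH y) - br (br HH x) y = 0"
    using j by (simp add: br_neg_right)
  then show ?thesis unfolding D_def by (simp add: algebra_simps)
qed

lemma KK_D: "k \<in> KK \<Longrightarrow> D k = 0"
  unfolding KK_def
proof (induction rule: lie_gen.induct)
  case (gen x)
  then show ?case using D_e D_f by (auto simp: tS_def)
next
  case zero then show ?case by (rule D_zero)
next
  case (add x y) then show ?case by (simp add: D_add)
next
  case (smult x a) then show ?case by (simp add: D_scale)
next
  case (bracket x y) then show ?case by (simp add: D_br)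
qed

definition "U0 = {x\<in>PP. \<exists>d::nat. 1 \<le> d \<and> D x = sc (of_nat d) x}"

lemma U0_PP: "U0 \<subseteq> PP" unfolding U0_def by auto

lemma spanU0_PP: "span U0 \<subseteq> PP" by (rule span_minimal[OF U0_PP PP_sub])

lemma LU1: assumes k: "k \<in> KK" and v: "v \<in> span U0" shows "br k v \<in> span U0"
  using v
proof (induction rule: span_induct_alt)
  case base then show ?case by (simp add: span_zero)
next
  case (step a x y)
  then obtain d where d: "1 \<le> d" "D x = sc (of_nat d) x" "x \<in> PP" unfolding U0_def by auto
  have "br k x \<in> U0"
    unfolding U0_def using d k KK_PP PP_br KK_D[OF k]
    by (auto simp: D_br br_scale_right intro!: exI[of _ d])
  then have "br k (sc a x) \<in> span U0" by (simp add: br_scale_right span_base span_scale)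
  then show ?case using step by (simp add: br_add_right span_add)
qed

lemma LU2a: assumes x: "x \<in> U0" and w: "w \<in> span U0" shows "br x w \<in> span U0"
  using w
proof (induction rule: span_induct_alt)
  case base then show ?case by (simp add: span_zero)
next
  case (step a z y)
  obtain d where d: "1 \<le> d" "D x = sc (of_nat d) x" "x \<in> PP" using x unfolding U0_def by auto
  obtain d' where d': "1 \<le> d'" "D z = sc (of_nat d') z" "z \<in> PP" using step unfolding U0_def by auto
  have "br x z \<in> U0"
    unfolding U0_def using d d' PP_br
    by (auto simp: D_br br_scale_right br_scale_left scale_left_distrib[symmetric] intro!: exI[of _ "d + d'"])
  then have "br x (sc a z) \<in> span U0" by (simp add: br_scale_right span_base span_scale)
  then show ?case using step by (simp add: br_add_right span_add)
qed

lemma LU2: assumes v: "v \<in> span U0" and w: "w \<in> span U0" shows "br v w \<in> span U0"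
  using v
proof (induction rule: span_induct_alt)
  case base then show ?case by (simp add: span_zero)
next
  case (step a x y)
  have "br x w \<in> span U0" by (rule LU2a[OF step(1) w])
  then have "br (sc a x) w \<in> span U0" by (simp add: br_scale_left span_scale)
  then show ?case using step by (simp add: br_add_left span_add)
qed

lemma PP_decomp: "x \<in> PP \<Longrightarrow> \<exists>k v. k \<in> KK \<and> v \<in> span U0 \<and> x = k + v"
  unfolding PP_def
proof (induction rule: lie_gen.induct)
  case (gen x)
  show ?case
  proof (cases "x \<in> e ` S \<union> f ` S")
    case True
    then have "x \<in> KK" unfolding KK_def by (auto intro: lie_gen.gen)
    then show ?thesis by (intro exI[of _ x] exI[of _ 0]) (auto simp: span_zero)
  next
    case False
    then obtain j where j: "x = e j" "j \<notin> S" using gen by auto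
    have "x \<in> U0" unfolding U0_def PP_def using j D_e
      by (auto simp: tS_def intro!: lie_gen.gen exI[of _ 1])
    then show ?thesis using KK_sub subspace_0
      by (intro exI[of _ 0] exI[of _ x]) (auto simp: span_base)
  qed
next
  case zero then show ?case using KK_sub subspace_0 by (intro exI[of _ 0] exI[of _ 0]) (auto simp: span_zero)
next
  case (add x y)
  then obtain k1 v1 k2 v2 where "k1 \<in> KK" "v1 \<in> span U0" "x = k1 + v1" "k2 \<in> KK" "v2 \<in> span U0" "y = k2 + v2"
    by blast
  then show ?case using KK_sub
    by (intro exI[of _ "k1 + k2"] exI[of _ "v1 + v2"]) (auto simp: span_add subspace_add algebra_simps)
next
  case (smult x a)
  then obtain k1 v1 where "k1 \<in> KK" "v1 \<in> span U0" "x = k1 + v1" by blast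
  then show ?case using KK_sub
    by (intro exI[of _ "sc a k1"] exI[of _ "sc a v1"]) (auto simp: span_scale subspace_scale scale_right_distrib)
next
  case (bracket x y)
  then obtain k1 v1 k2 v2 where kv: "k1 \<in> KK" "v1 \<in> span U0" "x = k1 + v1" "k2 \<in> KK" "v2 \<in> span U0" "y = k2 + v2"
    by blast
  have "br x y = br k1 k2 + (br k1 v2 + (- br k2 v1) + br v1 v2)"
    unfolding kv(3,6) by (simp add: br_add_left br_add_right br_antisym[of v1 k2] algebra_simps)
  moreover have "br k1 k2 \<in> KK" using kv KK_br by auto
  moreover have "br k1 v2 + (- br k2 v1) + br v1 v2 \<in> span U0"
    by (intro span_add span_neg LU1 LU2) (use kv in auto)
  ultimately show ?case by blast
qed

end

context vsl begin

lemma rep_combo: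
  assumes fin: "finite B" and ind: "independent B"
  shows "representation B (\<Sum>b\<in>B. sc (g b) b) b0 = (if b0 \<in> B then g b0 else 0)"
proof -
  have "representation B (\<Sum>b\<in>B. sc (g b) b) = (\<lambda>b0. \<Sum>b\<in>B. representation B (sc (g b) b) b0)"
    by (rule representation_sum[OF ind]) (auto intro: span_scale span_base)
  also have "\<dots> = (\<lambda>b0. \<Sum>b\<in>B. g b * (if b0 = b then 1 else 0))"
    by (intro ext sum.cong refl) (simp add: representation_scale[OF ind] span_base representation_basis[OF ind])
  finally show ?thesis using fin by (simp add: if_distrib[of "\<lambda>x. _ * x"] sum.delta cong: if_cong)
qed

lemma rep_expand:
  assumes fin: "finite B" and ind: "independent B" and v: "v \<in> span B"
  shows "v = (\<Sum>b\<in>B. sc (representation B v b) b)"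
  using sum_representation_eq[OF ind v fin subset_refl] by simp

end

context setting begin

lemma findim: "independent X \<Longrightarrow> finite X"
  using fin independent_span_bound by blast

definition "BB = (SOME B. B \<subseteq> U0 \<and> independent B \<and> U0 \<subseteq> span B)"
definition "BK = (SOME B. B \<subseteq> KK \<and> independent B \<and> KK \<subseteq> span B)"

lemma BB: "BB \<subseteq> U0" "independent BB" "U0 \<subseteq> span BB"
proof -
  obtain B where "B \<subseteq> U0" "independent B" "U0 \<subseteq> span B" by (rule maximal_independent_subset)
  then have "\<exists>B. B \<subseteq> U0 \<and> independent B \<and> U0 \<subseteq> span B" by blast
  from someI_ex[OF this] show "BB \<subseteq> U0" "independent BB" "U0 \<subseteq> span BB" unfolding BB_def by blast+
qed

lemma BK: "BK \<subseteq> KK" "independent BK" "KK \<subseteq> span BK"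
proof -
  obtain B where "B \<subseteq> KK" "independent B" "KK \<subseteq> span B" by (rule maximal_independent_subset)
  then have "\<exists>B. B \<subseteq> KK \<and> independent B \<and> KK \<subseteq> span B" by blast
  from someI_ex[OF this] show "BK \<subseteq> KK" "independent BK" "KK \<subseteq> span BK" unfolding BK_def by blast+
qed

lemma finBB: "finite BB" using findim BB(2) .
lemma finBK: "finite BK" using findim BK(2) .

lemma spanBB: "span BB = span U0"
proof
  show "span BB \<subseteq> span U0" using BB(1) by (rule span_mono)
  show "span U0 \<subseteq> span BB" using BB(3) span_minimal subspace_span by blast
qed

lemma spanBK: "span BK \<subseteq> KK" using BK(1) KK_sub span_minimal by blast

definition deg :: "'a \<Rightarrow> nat" where "deg b = (SOME d. 1 \<le> d \<and> D b = sc (of_nat d) b)"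

lemma deg: "b \<in> U0 \<Longrightarrow> 1 \<le> deg b \<and> D b = sc (of_nat (deg b)) b"
  unfolding deg_def U0_def by (rule someI_ex) auto

lemma repD:
  assumes v: "v \<in> span BB"
  shows "representation BB (D v) b0 = of_nat (deg b0) * representation BB v b0"
proof -
  let ?r = "representation BB v"
  have "D v = D (\<Sum>b\<in>BB. sc (?r b) b)" using rep_expand[OF finBB BB(2) v] by simp
  also have "\<dots> = (\<Sum>b\<in>BB. sc (?r b * of_nat (deg b)) b)"
    unfolding D_sum D_scale by (rule sum.cong) (use deg BB(1) in \<open>auto simp: scale_scale\<close>)
  finally have "representation BB (D v) b0 = (if b0 \<in> BB then ?r b0 * of_nat (deg b0) else 0)"
    using rep_combo[OF finBB BB(2)] by simp
  then show ?thesis using representation_ne_zero[of BB v b0] by (auto simp: mult.commute)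
qed

lemma rep_eig:
  assumes v: "v \<in> span BB" and ev: "D v = sc lam v" and nz: "representation BB v b0 \<noteq> 0"
  shows "of_nat (deg b0) = lam"
proof -
  have "representation BB (D v) b0 = lam * representation BB v b0"
    unfolding ev by (simp add: representation_scale[OF BB(2) v])
  then show ?thesis using repD[OF v, of b0] nz by simp
qed

lemma sep: assumes "v \<in> KK" "v \<in> span BB" shows "v = 0"
proof -
  have D0: "D v = sc 0 v" using KK_D[OF assms(1)] by simp
  have "representation BB v b = 0" for b
  proof (rule ccontr)
    assume nz: "representation BB v b \<noteq> 0"
    then have "b \<in> BB" using representation_ne_zero by blast
    then have "1 \<le> deg b" using deg BB(1) by auto
    moreover have "of_nat (deg b) = (0::complex)" by (rule rep_eig[OF assms(2) D0 nz])
    ultimately show False by simp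
  qed
  then show ?thesis using rep_expand[OF finBB BB(2) assms(2)] by simp
qed

lemma disjW: "BK \<inter> BB = {}"
proof -
  { fix x assume "x \<in> BK" "x \<in> BB"
    then have "x \<in> KK" "x \<in> span BB" using BK(1) span_base by auto
    then have "x = 0" by (rule sep)
    with \<open>x \<in> BB\<close> BB(2) dependent_zero have False by blast }
  then show ?thesis by blast
qed

definition "WW = BK \<union> BB"

lemma finWW: "finite WW" unfolding WW_def using finBB finBK by simp

lemma indWW: "independent WW"
proof
  assume "dependent WW"
  then obtain t u where t: "finite t" "t \<subseteq> WW" and s0: "(\<Sum>v\<in>t. sc (u v) v) = 0" and ex: "\<exists>v\<in>t. u v \<noteq> 0"
    unfolding dependent_explicit by blast
  define s1 where "s1 = (\<Sum>v\<in>t \<inter> BK. sc (u v) v)"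
  define s2 where "s2 = (\<Sum>v\<in>t \<inter> BB. sc (u v) v)"
  have tt: "t = (t \<inter> BK) \<union> (t \<inter> BB)" using t unfolding WW_def by auto
  have "s1 + s2 = 0" unfolding s1_def s2_def using s0 tt disjW t
    by (metis (no_types, lifting) Int_Un_distrib2 boolean_algebra.conj_zero_right finite_Int inf_commute
         inf_left_commute sum.union_disjoint)
  then have s2e: "s2 = - s1" by (simp add: eq_neg_iff_add_eq_0 add.commute)
  have "s1 \<in> span BK" unfolding s1_def by (intro span_sum span_scale span_base) auto
  then have "s1 \<in> KK" using spanBK by blast
  then have "s2 \<in> KK" using s2e KK_sub subspace_neg by blast
  moreover have "s2 \<in> span BB" unfolding s2_def by (intro span_sum span_scale span_base) auto
  ultimately have z2: "s2 = 0" by (rule sep)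
  then have z1: "s1 = 0" using s2e by simp
  show False
  proof (cases "\<exists>v\<in>t \<inter> BB. u v \<noteq> 0")
    case True
    then have "dependent BB" unfolding dependent_explicit using z2 t unfolding s2_def
      by (intro exI[of _ "t \<inter> BB"] exI[of _ u]) auto
    then show False using BB(2) by simp
  next
    case False
    then have "\<exists>v\<in>t \<inter> BK. u v \<noteq> 0" using ex tt by blast
    then have "dependent BK" unfolding dependent_explicit using z1 t unfolding s1_def
      by (intro exI[of _ "t \<inter> BK"] exI[of _ u]) auto
    then show False using BK(2) by simp
  qed
qed

lemma PP_spanWW: "PP \<subseteq> span WW"
proof
  fix x assume "x \<in> PP"
  then obtain k v where kv: "k \<in> KK" "v \<in> span U0" "x = k + v" using PP_decomp by blast
  have "k \<in> span WW" using kv BK(3) span_mono[of BK WW] unfolding WW_def by auto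
  moreover have "v \<in> span WW" using kv spanBB span_mono[of BB WW] unfolding WW_def by auto
  ultimately show "x \<in> span WW" using kv span_add by simp
qed

lemma WW_PP: "WW \<subseteq> PP" unfolding WW_def using BK(1) BB(1) KK_PP U0_PP by auto

end

lemma mat_delete_eq_rows:
  assumes A: "A \<in> carrier_mat n n" and B: "B \<in> carrier_mat n n" and i: "i < n"
    and rows: "\<And>r j. r < n \<Longrightarrow> j < n \<Longrightarrow> r \<noteq> i \<Longrightarrow> A $$ (r,j) = B $$ (r,j)"
  shows "mat_delete A i j = mat_delete B i j"
  by (rule eq_matI) (use A B i rows in \<open>auto simp: mat_delete_def\<close>)

lemma cofactor_eq_rows:
  assumes A: "A \<in> carrier_mat n n" and B: "B \<in> carrier_mat n n" and i: "i < n"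
    and rows: "\<And>r j. r < n \<Longrightarrow> j < n \<Longrightarrow> r \<noteq> i \<Longrightarrow> A $$ (r,j) = B $$ (r,j)"
  shows "cofactor A i j = cofactor B i j"
  unfolding cofactor_def using mat_delete_eq_rows[OF A B i rows] by simp

lemma det_row_lin:
  fixes A B C :: "'a::comm_ring_1 mat"
  assumes A: "A \<in> carrier_mat n n" and B: "B \<in> carrier_mat n n" and C: "C \<in> carrier_mat n n" and i: "i < n"
    and rB: "\<And>r j. r < n \<Longrightarrow> j < n \<Longrightarrow> r \<noteq> i \<Longrightarrow> B $$ (r,j) = A $$ (r,j)"
    and rC: "\<And>r j. r < n \<Longrightarrow> j < n \<Longrightarrow> r \<noteq> i \<Longrightarrow> C $$ (r,j) = A $$ (r,j)"
    and ri: "\<And>j. j < n \<Longrightarrow> A $$ (i,j) = a * B $$ (i,j) + C $$ (i,j)"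
  shows "det A = a * det B + det C"
proof -
  have cB: "cofactor B i j = cofactor A i j" for j by (rule cofactor_eq_rows[OF B A i rB])
  have cC: "cofactor C i j = cofactor A i j" for j by (rule cofactor_eq_rows[OF C A i rC])
  have "det A = (\<Sum>j<n. A $$ (i,j) * cofactor A i j)" by (rule laplace_expansion_row[OF A i])
  also have "\<dots> = (\<Sum>j<n. a * (B $$ (i,j) * cofactor B i j) + C $$ (i,j) * cofactor C i j)"
    by (rule sum.cong) (auto simp: ri cB cC algebra_simps)
  also have "\<dots> = a * det B + det C"
    by (simp add: sum.distrib sum_distrib_left laplace_expansion_row[OF B i] laplace_expansion_row[OF C i])
  finally show ?thesis .
qed

lemma det_row_zero:
  fixes A :: "'a::comm_ring_1 mat"
  assumes A: "A \<in> carrier_mat n n" and i: "i < n" and z: "\<And>j. j < n \<Longrightarrow> A $$ (i,j) = 0"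
  shows "det A = 0"
  using laplace_expansion_row[OF A i] z by simp

lemma det_trace:
  fixes M :: "'a::comm_ring_1 mat"
  assumes M: "M \<in> carrier_mat n n"
  shows "(\<Sum>i<n. det (mat n n (\<lambda>(r,m). if r = i then (\<Sum>l<n. M $$ (i,l) * T l m) else M $$ (r,m))))
        = det M * (\<Sum>l<n. T l l)"
proof -
  let ?Mi = "\<lambda>i. mat n n (\<lambda>(r,m). if r = i then (\<Sum>l<n. M $$ (i,l) * T l m) else M $$ (r,m))"
  have Mi: "?Mi i \<in> carrier_mat n n" for i by simp
  have di: "det (?Mi i) = (\<Sum>m<n. (\<Sum>l<n. M $$ (i,l) * T l m) * cofactor M i m)" if i: "i < n" for i
  proof -
    have "det (?Mi i) = (\<Sum>m<n. ?Mi i $$ (i,m) * cofactor (?Mi i) i m)"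
      by (rule laplace_expansion_row[OF Mi i])
    also have "\<dots> = (\<Sum>m<n. (\<Sum>l<n. M $$ (i,l) * T l m) * cofactor M i m)"
      by (rule sum.cong[OF refl]) (use i M cofactor_eq_rows[OF Mi M i] in auto)
    finally show ?thesis .
  qed
  have adj: "(\<Sum>i<n. cofactor M i m * M $$ (i,l)) = (if m = l then det M else 0)" if "m < n" "l < n" for m l
  proof -
    have "(adj_mat M * M) $$ (m,l) = (\<Sum>i<n. cofactor M i m * M $$ (i,l))"
      using M that unfolding adj_mat_def times_mat_def scalar_prod_def
      by (auto simp: lessThan_atLeast0 intro!: sum.cong)
    then show ?thesis using adj_mat(3)[OF M] that by (cases "m = l") simp_all
  qed
  have "(\<Sum>i<n. det (?Mi i)) = (\<Sum>i<n. \<Sum>m<n. \<Sum>l<n. T l m * (cofactor M i m * M $$ (i,l)))"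
  proof (rule sum.cong[OF refl])
    fix i assume "i \<in> {..<n}"
    then have "det (?Mi i) = (\<Sum>m<n. (\<Sum>l<n. M $$ (i,l) * T l m) * cofactor M i m)" using di by simp
    also have "\<dots> = (\<Sum>m<n. \<Sum>l<n. T l m * (cofactor M i m * M $$ (i,l)))"
      by (rule sum.cong[OF refl], subst sum_distrib_right, rule sum.cong[OF refl]) (simp add: mult_ac)
    finally show "det (?Mi i) = (\<Sum>m<n. \<Sum>l<n. T l m * (cofactor M i m * M $$ (i,l)))" .
  qed
  also have "\<dots> = (\<Sum>m<n. \<Sum>i<n. \<Sum>l<n. T l m * (cofactor M i m * M $$ (i,l)))"
    by (rule sum.swap)
  also have "\<dots> = (\<Sum>m<n. \<Sum>l<n. \<Sum>i<n. T l m * (cofactor M i m * M $$ (i,l)))"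
    by (rule sum.cong[OF refl], rule sum.swap)
  also have "\<dots> = (\<Sum>m<n. \<Sum>l<n. T l m * (\<Sum>i<n. cofactor M i m * M $$ (i,l)))"
    by (simp add: sum_distrib_left)
  also have "\<dots> = (\<Sum>m<n. \<Sum>l<n. T l m * (if m = l then det M else 0))"
    by (rule sum.cong[OF refl], rule sum.cong[OF refl]) (simp add: adj)
  also have "\<dots> = (\<Sum>m<n. T m m * det M)"
    by (rule sum.cong[OF refl]) (simp add: if_distrib[of "\<lambda>x. _ * x"] sum.delta cong: if_cong)
  finally show ?thesis by (simp add: sum_distrib_left mult.commute)
qed


context setting begin

definition bs :: "'a list" where "bs = (SOME l. distinct l \<and> set l = BB)"

lemma bs: "distinct bs" "set bs = BB"
proof -
  have "\<exists>l. distinct l \<and> set l = BB" using finite_distinct_list[OF finBB] by blast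
  from someI_ex[OF this] show "distinct bs" "set bs = BB" unfolding bs_def by blast+
qed

definition "NN = length bs"

lemma bs_nth: "l < NN \<Longrightarrow> bs ! l \<in> BB" unfolding NN_def using bs(2) nth_mem by blast

lemma bs_PP: "l < NN \<Longrightarrow> bs ! l \<in> PP" using bs_nth BB(1) U0_PP by blast

definition coord :: "'a \<Rightarrow> nat \<Rightarrow> complex" where "coord v m = representation WW v (bs ! m)"

lemma PPW: "v \<in> PP \<Longrightarrow> v \<in> span WW" using PP_spanWW by blast

lemma co_lin: "v \<in> PP \<Longrightarrow> w \<in> PP \<Longrightarrow> coord (sc a v + w) m = a * coord v m + coord w m"
  unfolding coord_def
  by (simp add: representation_add[OF indWW] representation_scale[OF indWW] span_scale PPW)

lemma co_diff: "v \<in> PP \<Longrightarrow> w \<in> PP \<Longrightarrow> coord (v - w) m = coord v m - coord w m"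
  unfolding coord_def by (simp add: representation_diff[OF indWW] PPW)

lemma co_zero: "coord 0 m = 0"
  unfolding coord_def by (simp add: representation_zero)

lemma co_sum: "(\<And>t. t \<in> T \<Longrightarrow> g t \<in> PP) \<Longrightarrow> coord (\<Sum>t\<in>T. g t) m = (\<Sum>t\<in>T. coord (g t) m)"
  unfolding coord_def by (subst representation_sum[OF indWW]) (auto simp: PPW)

lemma co_scale: "v \<in> PP \<Longrightarrow> coord (sc a v) m = a * coord v m"
  unfolding coord_def by (simp add: representation_scale[OF indWW] PPW)

lemma co_K: assumes k: "k \<in> KK" and m: "m < NN" shows "coord k m = 0"
proof -
  have ks: "k \<in> span BK" using k BK(3) by blast
  have "representation WW k = representation BK k"
    by (rule representation_extend[OF indWW ks]) (auto simp: WW_def)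
  moreover have "representation BK k (bs ! m) = 0"
    using representation_ne_zero[of BK k "bs ! m"] bs_nth[OF m] disjW by blast
  ultimately show ?thesis unfolding coord_def by simp
qed

lemma co_basis: assumes "l < NN" "m < NN" shows "coord (bs ! l) m = (if l = m then 1 else 0)"
proof -
  have "bs ! l \<in> WW" using bs_nth[OF assms(1)] WW_def by auto
  then have "representation WW (bs ! l) = (\<lambda>v. if v = bs ! l then 1 else 0)"
    by (rule representation_basis[OF indWW])
  moreover have "bs ! m = bs ! l \<longleftrightarrow> l = m" using bs(1) assms unfolding NN_def by (auto simp: nth_eq_iff_index_eq)
  ultimately show ?thesis unfolding coord_def by auto
qed

lemma co_BB: assumes v: "v \<in> span BB" shows "coord v m = representation BB v (bs ! m)"
proof -
  have "representation WW v = representation BB v"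
    by (rule representation_extend[OF indWW v]) (auto simp: WW_def)
  then show ?thesis unfolding coord_def by simp
qed

lemma sumBB: "(\<Sum>b\<in>BB. g b) = (\<Sum>l<NN. g (bs ! l))"
proof -
  have "bij_betw ((!) bs) {..<NN} BB" using bij_betw_nth[OF bs(1)] bs(2) NN_def by auto
  from sum.reindex_bij_betw[OF this, of g] show ?thesis by simp
qed

lemma expand_bs: assumes v: "v \<in> span BB" shows "v = (\<Sum>l<NN. sc (coord v l) (bs ! l))"
proof -
  have "v = (\<Sum>b\<in>BB. sc (representation BB v b) b)" by (rule rep_expand[OF finBB BB(2) v])
  also have "\<dots> = (\<Sum>l<NN. sc (coord v l) (bs ! l))" unfolding sumBB co_BB[OF v] ..
  finally show ?thesis .
qed

lemma co_decomp: assumes v: "v \<in> PP" shows "\<exists>k\<in>KK. v = k + (\<Sum>l<NN. sc (coord v l) (bs ! l))"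
proof -
  obtain k w where kw: "k \<in> KK" "w \<in> span U0" "v = k + w" using PP_decomp[OF v] by blast
  have w: "w \<in> span BB" using kw spanBB by simp
  have wP: "w \<in> PP" using kw spanU0_PP by blast
  have kP: "k \<in> PP" using kw KK_PP by blast
  have "coord v l = coord w l" if "l < NN" for l
    using co_lin[OF kP wP, of 1 l] co_K[OF kw(1) that] kw by simp
  then have "(\<Sum>l<NN. sc (coord v l) (bs ! l)) = w" using expand_bs[OF w] by simp
  then show ?thesis using kw by blast
qed

definition cmat :: "'a list \<Rightarrow> complex mat" where
  "cmat xs = mat NN NN (\<lambda>(i,m). coord (xs ! i) m)"

definition cc :: "'a list \<Rightarrow> complex" where "cc xs = det (cmat xs)"

lemma cmat_carrier: "cmat xs \<in> carrier_mat NN NN" unfolding cmat_def by simp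

definition TT :: "'a \<Rightarrow> nat \<Rightarrow> nat \<Rightarrow> complex" where "TT y l m = coord (br y (bs ! l)) m"

lemma co_br: assumes y: "y \<in> KK" and x: "x \<in> PP" and m: "m < NN"
  shows "coord (br y x) m = (\<Sum>l<NN. coord x l * TT y l m)"
proof -
  obtain k where k: "k \<in> KK" "x = k + (\<Sum>l<NN. sc (coord x l) (bs ! l))" using co_decomp[OF x] by blast
  have yP: "y \<in> PP" using y KK_PP by blast
  have bP: "br y (bs ! l) \<in> PP" if "l < NN" for l using PP_br[OF yP bs_PP[OF that]] .
  have "br y x = br y k + (\<Sum>l<NN. sc (coord x l) (br y (bs ! l)))"
    by (subst k(2)) (simp add: br_add_right br_sum_right br_scale_right)
  moreover have "br y k \<in> KK" using KK_br y k by blast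
  moreover have "(\<Sum>l<NN. sc (coord x l) (br y (bs ! l))) \<in> PP"
    using bP by (auto intro!: subspace_sum[OF PP_sub] subspace_scale[OF PP_sub])
  ultimately have "coord (br y x) m = coord (br y k) m + coord (\<Sum>l<NN. sc (coord x l) (br y (bs ! l))) m"
    using co_lin[of "br y k" _ 1 m] KK_PP by auto
  also have "coord (br y k) m = 0" using co_K m \<open>br y k \<in> KK\<close> by blast
  also have "coord (\<Sum>l<NN. sc (coord x l) (br y (bs ! l))) m = (\<Sum>l<NN. coord x l * TT y l m)"
    by (subst co_sum) (use bP PP_sub subspace_scale in \<open>auto simp: co_scale TT_def\<close>)
  finally show ?thesis by simp
qed

end

context setting begin

definition tr :: "'a \<Rightarrow> complex" where "tr y = (\<Sum>l<NN. TT y l l)"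

lemma brbP: "y \<in> PP \<Longrightarrow> l < NN \<Longrightarrow> br y (bs ! l) \<in> PP" using PP_br bs_PP by blast

lemma tr_lin: assumes "y \<in> PP" "z \<in> PP" shows "tr (sc a y + z) = a * tr y + tr z"
proof -
  have "TT (sc a y + z) l l = a * TT y l l + TT z l l" if "l < NN" for l
    unfolding TT_def br_add_left br_scale_left using co_lin brbP assms that by blast
  then show ?thesis unfolding tr_def by (simp add: sum.distrib sum_distrib_left)
qed

lemma tr_zero: "tr 0 = 0" unfolding tr_def TT_def by (simp add: co_zero)

lemma tr_br: assumes a: "a \<in> KK" and b: "b \<in> KK" shows "tr (br a b) = 0"
proof -
  have aP: "a \<in> PP" and bP: "b \<in> PP" using a b KK_PP by auto
  have T: "TT (br a b) l l = (\<Sum>s<NN. TT b l s * TT a s l) - (\<Sum>s<NN. TT a l s * TT b s l)"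
    if l: "l < NN" for l
  proof -
    let ?v = "bs ! l"
    have vP: "?v \<in> PP" using bs_PP l .
    have "TT (br a b) l l = coord (br a (br b ?v) - br b (br a ?v)) l"
      unfolding TT_def jacobi' ..
    also have "\<dots> = coord (br a (br b ?v)) l - coord (br b (br a ?v)) l"
      by (rule co_diff) (use aP bP vP PP_br in auto)
    also have "coord (br a (br b ?v)) l = (\<Sum>s<NN. coord (br b ?v) s * TT a s l)"
      by (rule co_br[OF a _ l]) (use bP vP PP_br in auto)
    also have "coord (br b (br a ?v)) l = (\<Sum>s<NN. coord (br a ?v) s * TT b s l)"
      by (rule co_br[OF b _ l]) (use aP vP PP_br in auto)
    finally show ?thesis unfolding TT_def .
  qed
  have "tr (br a b) = (\<Sum>l<NN. \<Sum>s<NN. TT b l s * TT a s l) - (\<Sum>l<NN. \<Sum>s<NN. TT a l s * TT b s l)"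
    unfolding tr_def by (simp add: T sum_subtractf)
  also have "(\<Sum>l<NN. \<Sum>s<NN. TT a l s * TT b s l) = (\<Sum>s<NN. \<Sum>l<NN. TT a l s * TT b s l)"
    by (rule sum.swap)
  also have "\<dots> = (\<Sum>l<NN. \<Sum>s<NN. TT b l s * TT a s l)"
    by (simp add: mult.commute)
  finally show ?thesis by simp
qed

lemma KK_spanBr: "KK \<subseteq> span {br a b | a b. a \<in> KK \<and> b \<in> KK}"
proof
  fix x assume "x \<in> KK"
  then show "x \<in> span {br a b | a b. a \<in> KK \<and> b \<in> KK}"
  proof -
    assume x: "x \<in> KK"
    have gK: "e j \<in> KK" "f j \<in> KK" if "j \<in> S" for j using that unfolding KK_def by (auto intro: lie_gen.gen)
    show ?thesis using x[unfolded KK_def]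
    proof (induction rule: lie_gen.induct)
      case (gen x)
      then obtain j where j: "j \<in> S" "x = e j \<or> x = f j" by auto
      have hK: "h j \<in> KK" using ef[of j] KK_br gK[OF j(1)] by metis
      have "x = br (sc (if x = e j then 1/2 else -1/2) (h j)) x \<and> sc (if x = e j then 1/2 else -1/2) (h j) \<in> KK"
        using j(2) hK KK_sub subspace_scale
        by (auto simp: br_scale_left he hf Aii scale_scale)
      then have "x \<in> {br a b | a b. a \<in> KK \<and> b \<in> KK}"
        using j gK[OF j(1)] by blast
      then show ?case by (rule span_base)
    next
      case zero then show ?case by (rule span_zero)
    next
      case (add x y) then show ?case by (auto intro: span_add)
    next
      case (smult x a) then show ?case by (auto intro: span_scale)
    next
      case (bracket x y)
      then have "br x y \<in> {br a b | a b. a \<in> KK \<and> b \<in> KK}" unfolding KK_def by blast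
      then show ?case by (rule span_base)
    qed
  qed
qed

lemma tr_K: assumes y: "y \<in> KK" shows "tr y = 0"
proof -
  have "y \<in> span {br a b | a b. a \<in> KK \<and> b \<in> KK}" using KK_spanBr y by blast
  then have "y \<in> PP \<and> tr y = 0"
  proof (induction rule: span_induct_alt)
    case base then show ?case using tr_zero PP_sub subspace_0 by blast
  next
    case (step c x z)
    then obtain a b where ab: "x = br a b" "a \<in> KK" "b \<in> KK" by blast
    have xP: "x \<in> PP" using ab PP_br KK_PP by blast
    have "tr (sc c x + z) = c * tr x + tr z" by (rule tr_lin) (use xP step in auto)
    moreover have "sc c x + z \<in> PP" using xP step PP_sub subspace_add subspace_scale by blast
    ultimately show ?case using tr_br ab step by simp
  qed
  then show ?thesis by blast
qed

lemma cmat_idx: "r < NN \<Longrightarrow> m < NN \<Longrightarrow> cmat xs $$ (r,m) = coord (xs ! r) m"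
  unfolding cmat_def by simp

lemma cc_rc: "rel_cochain sc br PP KK NN cc"
  unfolding rel_cochain_def
proof (intro conjI)
  show "\<forall>xs\<in>plists PP NN. \<forall>i<NN. \<forall>u\<in>PP. \<forall>v\<in>PP. \<forall>a.
        cc (xs[i := sc a u + v]) = a * cc (xs[i := u]) + cc (xs[i := v])"
  proof (intro ballI allI impI)
    fix xs i u v a assume xs: "xs \<in> plists PP NN" and i: "i < NN" and u: "u \<in> PP" and v: "v \<in> PP"
    have len: "length xs = NN" using xs plists_def by auto
    show "cc (xs[i := sc a u + v]) = a * cc (xs[i := u]) + cc (xs[i := v])"
      unfolding cc_def
      by (rule det_row_lin[OF cmat_carrier cmat_carrier cmat_carrier i])
         (use len i u v in \<open>auto simp: cmat_idx co_lin\<close>)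
  qed
next
  show "\<forall>xs\<in>plists PP NN. \<forall>i j. i < j \<and> j < NN \<and> xs ! i = xs ! j \<longrightarrow> cc xs = 0"
  proof (intro ballI allI impI)
    fix xs i j assume xs: "xs \<in> plists PP NN" and ij: "i < j \<and> j < NN \<and> xs ! i = xs ! j"
    show "cc xs = 0" unfolding cc_def
      by (rule det_identical_rows[OF cmat_carrier, of i j])
         (use ij in \<open>auto intro!: eq_vecI simp: cmat_idx cmat_def\<close>)
  qed
next
  show "\<forall>xs\<in>plists PP NN. (\<exists>i<NN. xs ! i \<in> KK) \<longrightarrow> cc xs = 0"
  proof (intro ballI impI)
    fix xs assume xs: "xs \<in> plists PP NN" and "\<exists>i<NN. xs ! i \<in> KK"
    then obtain i where i: "i < NN" "xs ! i \<in> KK" by blast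
    show "cc xs = 0" unfolding cc_def
      by (rule det_row_zero[OF cmat_carrier i(1)]) (use i co_K in \<open>auto simp: cmat_idx\<close>)
  qed
next
  show "\<forall>xs\<in>plists PP NN. \<forall>y\<in>KK. (\<Sum>i<NN. cc (xs[i := br y (xs ! i)])) = 0"
  proof (intro ballI)
    fix xs y assume xs: "xs \<in> plists PP NN" and y: "y \<in> KK"
    have len: "length xs = NN" using xs plists_def by auto
    have xP: "xs ! r \<in> PP" if "r < NN" for r using plists_nth[OF xs that] .
    let ?M = "cmat xs"
    have eq: "cmat (xs[i := br y (xs ! i)]) =
        mat NN NN (\<lambda>(r,m). if r = i then (\<Sum>l<NN. ?M $$ (i,l) * TT y l m) else ?M $$ (r,m))"
      if i: "i < NN" for i
      by (rule eq_matI) (use i len xP in \<open>auto simp: cmat_idx co_br[OF y] cmat_def\<close>)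
    have "(\<Sum>i<NN. cc (xs[i := br y (xs ! i)])) =
        (\<Sum>i<NN. det (mat NN NN (\<lambda>(r,m). if r = i then (\<Sum>l<NN. ?M $$ (i,l) * TT y l m) else ?M $$ (r,m))))"
      unfolding cc_def by (rule sum.cong) (auto simp: eq)
    also have "\<dots> = det ?M * (\<Sum>l<NN. TT y l l)" by (rule det_trace[OF cmat_carrier])
    also have "(\<Sum>l<NN. TT y l l) = 0" using tr_K[OF y] unfolding tr_def .
    finally show "(\<Sum>i<NN. cc (xs[i := br y (xs ! i)])) = 0" by simp
  qed
qed

end

context setting begin

lemma NN_pos: "0 < NN"
proof -
  obtain j where j: "j \<notin> S" using SU by blast
  have eU: "e j \<in> U0" unfolding U0_def PP_def using j D_e
    by (auto simp: tS_def intro!: lie_gen.gen exI[of _ 1])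
  have "e j \<noteq> 0"
  proof
    assume "e j = 0"
    then have "h j = 0" using ef[of j] by simp
    then have "0 \<in> range h" by (metis rangeI)
    then show False using hind dependent_zero by blast
  qed
  moreover have "e j \<in> span BB" using eU spanBB span_base by blast
  ultimately have "BB \<noteq> {}" by auto
  then show ?thesis unfolding NN_def using bs finBB by (metis card_gt_0_iff distinct_card)
qed

lemma bs_plists: "bs \<in> plists PP NN"
  unfolding plists_def NN_def using bs(2) BB(1) U0_PP by auto

lemma cc_bs: "cc bs = 1"
proof -
  have "cmat bs = 1\<^sub>m NN" by (rule eq_matI) (auto simp: cmat_idx co_basis cmat_def)
  then show ?thesis unfolding cc_def by simp
qed

lemma cocycle: "\<forall>xs\<in>plists PP (Suc NN). ce_diff br NN cc xs = 0"
proof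
  fix xs assume xs: "xs \<in> plists PP (Suc NN)"
  obtain n0 where n0: "NN = Suc n0" using NN_pos not0_implies_Suc by blast
  have rc: "rel_cochain sc br PP KK (Suc n0) cc" using cc_rc n0 by simp
  show "ce_diff br NN cc xs = 0" unfolding n0
  proof (rule top_vanish[OF PP_sub KK_PP spanBK BK(2) finBK finBB])
    show "PP \<subseteq> span (BK \<union> BB)" using PP_spanWW WW_def by simp
    show "card BB < Suc (Suc n0)" using n0 bs distinct_card unfolding NN_def by fastforce
    show "multilin PP (Suc (Suc n0)) (ce_diff br (Suc n0) cc)" by (rule lpk.dc_multilin[OF rc])
    show "alt PP (Suc (Suc n0)) (ce_diff br (Suc n0) cc)" by (rule lpk.dc_alt[OF rc])
    show "\<forall>xs\<in>plists PP (Suc (Suc n0)). \<forall>p<Suc (Suc n0). xs ! p \<in> KK \<longrightarrow> ce_diff br (Suc n0) cc xs = 0"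
      using lpk.dc_kv[OF rc] by blast
    show "xs \<in> plists PP (Suc (Suc n0))" using xs n0 by simp
  qed
qed

lemma noncob:
  assumes m: "NN = Suc m" and rb: "rel_cochain sc br PP KK m b"
  shows "ce_diff br m b bs = 0"
proof -
  have "cterm b bs i j = 0" if ij: "(i,j) \<in> Pr (Suc m)" for i j
  proof -
    from ij have ij': "i < j" "j < Suc m" unfolding Pr_def by auto
    then obtain m' where m': "m = Suc m'" by (metis less_nat_zero_code not0_implies_Suc less_Suc_eq_0_disj)
    have len: "length bs = Suc (Suc m')" using m m' NN_def by simp
    have bsP: "bs \<in> plists PP (Suc (Suc m'))" using bs_plists m m' by simp
    define w where "w = br (bs ! i) (bs ! j)"
    define rest where "rest = del2 i j bs"
    have rest: "rest \<in> plists PP m'" unfolding rest_def using lpk.plists_del2[OF bsP] ij' m' by auto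
    have iN: "i < NN" "j < NN" using ij' m by auto
    have bi: "bs ! i \<in> U0" "bs ! j \<in> U0" using bs_nth iN BB(1) by auto
    have wB: "w \<in> span BB" unfolding w_def spanBB by (rule LU2) (use bi span_base in auto)
    have wP: "w \<in> PP" using wB spanBB spanU0_PP by auto
    have Dw: "D w = sc (of_nat (deg (bs!i) + deg (bs!j))) w"
      unfolding w_def D_br using deg[OF bi(1)] deg[OF bi(2)]
      by (simp add: br_scale_left br_scale_right scale_left_distrib)
    have wexp: "w = (\<Sum>l<NN. sc (coord w l) (bs ! l))" by (rule expand_bs[OF wB])
    have ml: "multilin PP (Suc m') b" using lpk.rc_multilin[OF rb] m' by simp
    have al: "alt PP (Suc m') b" using lpk.rc_alt[OF rb] m' by simp
    have lin0: "lin_at PP (Suc m') b 0" using ml multilin_def by auto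
    have wr: "w # rest \<in> plists PP (Suc m')" using rest wP by (simp add: plists_Cons)
    have "b (w # rest) = b ((w # rest)[0 := (\<Sum>l<NN. sc (coord w l) (bs ! l))])"
      using wexp by simp
    also have "\<dots> = (\<Sum>l<NN. coord w l * b ((w # rest)[0 := bs ! l]))"
      by (rule lin_at_sum[OF PP_sub lin0 wr]) (use bs_PP in auto)
    also have "\<dots> = 0"
    proof (rule sum.neutral, rule ballI)
      fix l assume l: "l \<in> {..<NN}"
      show "coord w l * b ((w # rest)[0 := bs ! l]) = 0"
      proof (cases "coord w l = 0")
        case False
        then have "representation BB w (bs ! l) \<noteq> 0" using co_BB[OF wB] by simp
        then have "of_nat (deg (bs ! l)) = (of_nat (deg (bs!i) + deg (bs!j)) :: complex)"
          by (rule rep_eig[OF wB Dw])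
        then have dl: "deg (bs ! l) = deg (bs!i) + deg (bs!j)" by (simp only: of_nat_eq_iff)
        have "1 \<le> deg (bs!i)" "1 \<le> deg (bs!j)" using deg bi by auto
        then have lij: "l \<noteq> i" "l \<noteq> j" using dl by auto
        define pos where "pos = length (filter (\<lambda>k. k \<noteq> i \<and> k \<noteq> j) [0..<l])"
        have lN: "l < length bs" using l len m m' by simp
        have pl: "pos < m'" using lpk.pos_lt_del2[of l i j bs] lij lN rest
          unfolding pos_def rest_def plists_def by auto
        have rp: "rest ! pos = bs ! l" unfolding rest_def pos_def by (rule del2_nth_pos) (use lij lN in auto)
        have "b (bs ! l # rest) = 0"
          by (rule altD'[OF al, of _ 0 "Suc pos"]) (use rest bs_PP l pl rp in \<open>auto simp: plists_Cons\<close>)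
        then show ?thesis by simp
      qed simp
    qed
    finally have "b (w # rest) = 0" .
    then show ?thesis unfolding cterm_def w_def rest_def by simp
  qed
  then show ?thesis unfolding ce_diff_Pr by (intro sum.neutral) auto
qed

lemma main: "\<exists>n>0. rel_cohom_nonzero sc br PP KK n"
proof (intro exI conjI)
  show "0 < NN" by (rule NN_pos)
  show "rel_cohom_nonzero sc br PP KK NN"
    unfolding rel_cohom_nonzero_def
  proof (intro exI conjI)
    show "rel_cochain sc br PP KK NN cc" by (rule cc_rc)
    show "\<forall>xs\<in>plists PP (Suc NN). ce_diff br NN cc xs = 0" by (rule cocycle)
    show "\<not> (\<exists>b m. NN = Suc m \<and> rel_cochain sc br PP KK m b \<and>
              (\<forall>xs\<in>plists PP NN. ce_diff br m b xs = cc xs))"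
    proof
      assume "\<exists>b m. NN = Suc m \<and> rel_cochain sc br PP KK m b \<and> (\<forall>xs\<in>plists PP NN. ce_diff br m b xs = cc xs)"
      then obtain b m where bm: "NN = Suc m" "rel_cochain sc br PP KK m b"
        "\<forall>xs\<in>plists PP NN. ce_diff br m b xs = cc xs" by blast
      have "ce_diff br m b bs = cc bs" using bm(3) bs_plists by blast
      then show False using noncob[OF bm(1,2)] cc_bs by simp
    qed
  qed
qed

end

theorem proposition4p7:
  fixes A :: "'i::finite \<Rightarrow> 'i \<Rightarrow> int"
    and sc :: "complex \<Rightarrow> 'a::ab_group_add \<Rightarrow> 'a"
    and br :: "'a \<Rightarrow> 'a \<Rightarrow> 'a"
    and e f h :: "'i \<Rightarrow> 'a"
    and S :: "'i set"
  assumes "finite_type_cartan A"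
    and "chevalley_realization A sc br e f h"
    and "S \<noteq> UNIV"
  shows "\<exists>n>0. rel_cohom_nonzero sc br
            (lie_gen sc br (range e \<union> f ` S))
            (lie_gen sc br (e ` S \<union> f ` S)) n"
proof -
  have la: "lie_algebra sc br" using assms(2) unfolding chevalley_realization_def by blast
  then have vs: "vector_space sc" unfolding lie_algebra_def by blast
  interpret setting sc br A e f h S
    by (intro setting.intro lie.intro vsl.intro lie_axioms.intro setting_axioms.intro vs la assms)
  show ?thesis using main unfolding PP_def KK_def .
qed


end
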